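(* Let $q\ge2$, $N=2^q$, $b>0$, $h=b/N$, and let $A_q=h^2B_h$, where $B_h=(b_{i,j})_{i,j=1}^{N-1}$ is the symmetric Toeplitz matrix with $b_{i,i}=\frac{2N}3-1$, $b_{i,j}=\frac N6-1$ if $|i-j|=1$, and $b_{i,j}=-1$ if $|i-j|\ge2$. For $k=q,q-1,\dots,2$ define $A_{k-1}=I_k^{k-1}A_kI_{k-1}^k$, where $A_k$ has size $n_k=2^k-1$, $I_k^{k-1}:\mathbb R^{n_k}\to\mathbb R^{n_{k-1}}$ is $(I_k^{k-1}\nu)_i=\frac14(\nu_{2i-1}+2\nu_{2i}+\nu_{2i+1})$ and $I_{k-1}^k=2(I_k^{k-1})^T$. Let $D_k$ be the diagonal of $A_k$, let $\eta_0$ satisfy $\lambda_{\max}(D_k^{-1}A_k)\le\eta_0<3$ for all $1\le k\le q$, let $0<\omega<2/\eta_0$, let $0<\eta\le\omega(2-\omega\eta_0)$, and let $K_k=I-\omega D_k^{-1}A_k$. Then for every $1\le k\le q$, $\|K_k\nu\|_{A_k}^2\le\|\nu\|_{A_k}^2-\eta\|A_k\nu\|_{D_k^{-1}}^2$ for all $\nu\in\mathbb R^{n_k}$, and for every $2\le k\le q$, $$\|K_kT^k\|_{A_k}\le\sqrt{1-\eta/4}<1,\qquad T^k=I-I_{k-1}^kA_{k-1}^{-1}I_k^{k-1}A_k.$$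
   Context: For a symmetric positive definite $M$, $\|\nu\|_M=\sqrt{\nu^TM\nu}$ and for a matrix $X$, $\|X\|_M$ is the induced operator norm. $K_k$ is the damped Jacobi iteration matrix on level $k$, $T^k$ the coarse grid correction operator between levels $k$ and $k-1$ (Galerkin coarse matrices), and $K_kT^k$ the two-level iteration matrix at level $k$ of the multigrid hierarchy. $A_q$ is the piecewise linear finite element stiffness matrix of the nonlocal operator $u\mapsto\int_0^b[u(x)-u(y)]dy$ with zero exterior condition. *)

theory Defs
  imports "Jordan_Normal_Form.Matrix" "Jordan_Normal_Form.Char_Poly"
    "Jordan_Normal_Form.Gauss_Jordan_Elimination"
begin

(* Matrices are JNF matrices (real mat) with 0-based indices: paper index i
   corresponds to JNF index i-1. *)

definition nlev :: "nat \<Rightarrow> nat" where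
  "nlev k = 2 ^ k - 1"

definition Bmat :: "nat \<Rightarrow> real mat" where
  "Bmat q = (let N = (2::real) ^ q in
     mat (2 ^ q - 1) (2 ^ q - 1) (\<lambda>(i, j).
       if i = j then 2 * N / 3 - 1
       else if i = j + 1 \<or> j = i + 1 then N / 6 - 1
       else -1))"

(* restriction I_k^{k-1} : R^{n_k} -> R^{n_{k-1}},
   (I nu)_i = (nu_{2i-1} + 2 nu_{2i} + nu_{2i+1})/4 in 1-based indices *)
definition restr :: "nat \<Rightarrow> real mat" where
  "restr k = mat (nlev (k - 1)) (nlev k) (\<lambda>(i, j).
     if j = 2 * i then 1/4 else if j = 2 * i + 1 then 1/2
     else if j = 2 * i + 2 then 1/4 else 0)"

definition prolong :: "nat \<Rightarrow> real mat" where
  "prolong k = 2 \<cdot>\<^sub>m transpose_mat (restr k)"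

fun Agal :: "nat \<Rightarrow> real \<Rightarrow> nat \<Rightarrow> real mat" where
  "Agal q b 0 = ((b / 2 ^ q) ^ 2) \<cdot>\<^sub>m Bmat q"
| "Agal q b (Suc d) = restr (q - d) * Agal q b d * prolong (q - d)"

definition Alev :: "nat \<Rightarrow> real \<Rightarrow> nat \<Rightarrow> real mat" where
  "Alev q b k = Agal q b (q - k)"

definition diag_part :: "real mat \<Rightarrow> real mat" where
  "diag_part A = mat (dim_row A) (dim_col A) (\<lambda>(i, j). if i = j then A $$ (i, i) else 0)"

definition diag_inv :: "real mat \<Rightarrow> real mat" where
  "diag_inv A = the (mat_inverse (diag_part A))"

definition minv :: "real mat \<Rightarrow> real mat" where
  "minv A = the (mat_inverse A)"

definition lambda_max :: "real mat \<Rightarrow> real" where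
  "lambda_max A = Max {l. eigenvalue A l}"

definition vnorm :: "real mat \<Rightarrow> real vec \<Rightarrow> real" where
  "vnorm M v = sqrt (v \<bullet> (M *\<^sub>v v))"

definition opnorm :: "real mat \<Rightarrow> nat \<Rightarrow> real mat \<Rightarrow> real" where
  "opnorm M n X = Sup {vnorm M (X *\<^sub>v v) / vnorm M v | v. v \<in> carrier_vec n \<and> v \<noteq> 0\<^sub>v n}"

definition Kmat :: "real \<Rightarrow> real mat \<Rightarrow> real mat" where
  "Kmat \<omega> A = 1\<^sub>m (dim_row A) - \<omega> \<cdot>\<^sub>m (diag_inv A * A)"

definition Tmat :: "nat \<Rightarrow> real \<Rightarrow> nat \<Rightarrow> real mat" where
  "Tmat q b k = 1\<^sub>m (nlev k) - prolong k * minv (Alev q b (k - 1)) * restr k * Alev q b k"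

end

theory Submission
  imports Defs
begin


lemma sq_le_sprod:
  fixes x :: "real vec"
  assumes "x \<in> carrier_vec n" "i < n"
  shows "(x $ i)^2 \<le> x \<bullet> x"
proof -
  have "x \<bullet> x = (\<Sum>k\<in>{0..<n}. (x$k)^2)" using assms unfolding scalar_prod_def
    by (simp add: power2_eq_square)
  moreover have "(x$i)^2 \<le> (\<Sum>k\<in>{0..<n}. (x$k)^2)"
    by (rule member_le_sum[where f="\<lambda>k. (x$k)^2"]) (use assms in auto)
  ultimately show ?thesis by simp
qed

lemma sprod_self_nonneg: fixes x :: "real vec" shows "0 \<le> x \<bullet> x"
  unfolding scalar_prod_def by (auto intro!: sum_nonneg)

lemma abs_prod_half: fixes a b :: real shows "\<bar>a * b\<bar> \<le> (a^2 + b^2)/2"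
proof -
  have "0 \<le> (\<bar>a\<bar> - \<bar>b\<bar>)^2" by simp
  then have "2 * (\<bar>a\<bar> * \<bar>b\<bar>) \<le> \<bar>a\<bar>^2 + \<bar>b\<bar>^2" by (simp add: power2_diff)
  then show ?thesis by (simp add: abs_mult)
qed

lemma quad_bound:
  fixes M :: "real mat"
  assumes M: "M \<in> carrier_mat n n" and x: "x \<in> carrier_vec n"
  shows "\<bar>x \<bullet> (M *\<^sub>v x)\<bar> \<le> (\<Sum>i\<in>{0..<n}. \<Sum>j\<in>{0..<n}. \<bar>M$$(i,j)\<bar>) * (x \<bullet> x)"
proof -
  have e: "x \<bullet> (M *\<^sub>v x) = (\<Sum>i\<in>{0..<n}. \<Sum>j\<in>{0..<n}. x$i * M$$(i,j) * x$j)"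
    using M x unfolding scalar_prod_def
    by (auto simp: sum_distrib_left row_def mult.assoc scalar_prod_def intro!: sum.cong)
  have b: "\<bar>x$i * M$$(i,j) * x$j\<bar> \<le> \<bar>M$$(i,j)\<bar> * (x \<bullet> x)" if "i < n" "j < n" for i j
  proof -
    have "(x$i)^2 \<le> x \<bullet> x" "(x$j)^2 \<le> x \<bullet> x" using sq_le_sprod x that by auto
    moreover have "\<bar>x$i * x$j\<bar> \<le> ((x$i)^2 + (x$j)^2)/2"
      using abs_prod_half[of "x$i" "x$j"] .
    ultimately have "\<bar>x$i * x$j\<bar> \<le> x \<bullet> x"
      using order.trans[of "\<bar>x$i * x$j\<bar>" "((x$i)^2 + (x$j)^2)/2" "x \<bullet> x"] by (simp add: field_simps)
    then have "\<bar>M$$(i,j)\<bar> * \<bar>x$i * x$j\<bar> \<le> \<bar>M$$(i,j)\<bar> * (x \<bullet> x)"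
      by (rule mult_left_mono) simp
    then show ?thesis by (simp add: abs_mult algebra_simps)
  qed
  have "\<bar>x \<bullet> (M *\<^sub>v x)\<bar> \<le> (\<Sum>i\<in>{0..<n}. \<Sum>j\<in>{0..<n}. \<bar>x$i * M$$(i,j) * x$j\<bar>)"
    unfolding e by (rule order.trans[OF sum_abs sum_mono]) (rule sum_abs)
  also have "\<dots> \<le> (\<Sum>i\<in>{0..<n}. \<Sum>j\<in>{0..<n}. \<bar>M$$(i,j)\<bar> * (x \<bullet> x))"
    by (intro sum_mono b) auto
  finally show ?thesis by (simp add: sum_distrib_right)
qed


lemma smult_mat_vec: assumes "A \<in> carrier_mat nr nc" "v \<in> carrier_vec nc"
  shows "(k \<cdot>\<^sub>m A) *\<^sub>v v = k \<cdot>\<^sub>v (A *\<^sub>v (v :: real vec))"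
  using assms by (intro eq_vecI) (auto simp: scalar_prod_def sum_distrib_left ac_simps)

lemma sym_sprod:
  fixes A :: "real mat"
  assumes A: "A \<in> carrier_mat n n" and sym: "transpose_mat A = A"
    and u: "u \<in> carrier_vec n" and w: "w \<in> carrier_vec n"
  shows "u \<bullet> (A *\<^sub>v w) = (A *\<^sub>v u) \<bullet> w"
  using transpose_vec_mult_scalar[OF A w u] sym by simp

lemma xx_pos: fixes x :: "real vec"
  assumes x: "x \<in> carrier_vec n" and nz: "x \<noteq> 0\<^sub>v n" shows "0 < x \<bullet> x"
proof -
  obtain i where i: "i < n" "x $ i \<noteq> 0"
    using nz x by (metis eq_vecI carrier_vecD index_zero_vec(1,2))
  have "0 < (x$i)^2" using i by simp
  also have "\<dots> \<le> x \<bullet> x" using sq_le_sprod[OF x i(1)] .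
  finally show ?thesis .
qed

lemma norm_bound:
  fixes M :: "real mat"
  assumes M: "M \<in> carrier_mat n n"
  shows "\<exists>C\<ge>0. \<forall>y\<in>carrier_vec n. (M *\<^sub>v y) \<bullet> (M *\<^sub>v y) \<le> C * (y \<bullet> y)"
proof -
  define N where "N = transpose_mat M * M"
  have N: "N \<in> carrier_mat n n" using M unfolding N_def by auto
  define C where "C = (\<Sum>i\<in>{0..<n}. \<Sum>j\<in>{0..<n}. \<bar>N$$(i,j)\<bar>)"
  have C0: "C \<ge> 0" unfolding C_def by (intro sum_nonneg) auto
  have "(M *\<^sub>v y) \<bullet> (M *\<^sub>v y) \<le> C * (y \<bullet> y)" if y: "y \<in> carrier_vec n" for y
  proof -
    have My: "M *\<^sub>v y \<in> carrier_vec n" using M y by auto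
    have "(M *\<^sub>v y) \<bullet> (M *\<^sub>v y) = (transpose_mat M *\<^sub>v (M *\<^sub>v y)) \<bullet> y"
      using transpose_vec_mult_scalar[OF M y My] by simp
    also have "\<dots> = (N *\<^sub>v y) \<bullet> y" unfolding N_def using M y by simp
    also have "\<dots> = y \<bullet> (N *\<^sub>v y)" using N y by (intro comm_scalar_prod) auto
    also have "\<dots> \<le> C * (y \<bullet> y)" using quad_bound[OF N y] unfolding C_def by linarith
    finally show ?thesis .
  qed
  with C0 show ?thesis by blast
qed

lemma psd_cs:
  fixes Q :: "real mat"
  assumes Q: "Q \<in> carrier_mat n n"
    and sym: "\<And>u w. u \<in> carrier_vec n \<Longrightarrow> w \<in> carrier_vec n \<Longrightarrow> u \<bullet> (Q *\<^sub>v w) = (Q *\<^sub>v u) \<bullet> w"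
    and psd: "\<And>u. u \<in> carrier_vec n \<Longrightarrow> 0 \<le> u \<bullet> (Q *\<^sub>v u)"
    and y: "y \<in> carrier_vec n" and z: "z \<in> carrier_vec n"
  shows "(y \<bullet> (Q *\<^sub>v z))^2 \<le> (y \<bullet> (Q *\<^sub>v y)) * (z \<bullet> (Q *\<^sub>v z))"
proof -
  define a where "a = y \<bullet> (Q *\<^sub>v y)"
  define b where "b = y \<bullet> (Q *\<^sub>v z)"
  define c where "c = z \<bullet> (Q *\<^sub>v z)"
  have Qy: "Q *\<^sub>v y \<in> carrier_vec n" and Qz: "Q *\<^sub>v z \<in> carrier_vec n" using Q y z by auto
  have zy: "z \<bullet> (Q *\<^sub>v y) = b" unfolding b_def
    using sym[OF z y] comm_scalar_prod[OF Qz y] by simp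
  have quad: "0 \<le> a + 2*t*b + t^2*c" for t
  proof -
    have v: "y + t \<cdot>\<^sub>v z \<in> carrier_vec n" using y z by auto
    have "Q *\<^sub>v (y + t \<cdot>\<^sub>v z) = Q *\<^sub>v y + t \<cdot>\<^sub>v (Q *\<^sub>v z)"
      using Q y z by (simp add: mult_add_distrib_mat_vec mult_mat_vec)
    then have "(y + t \<cdot>\<^sub>v z) \<bullet> (Q *\<^sub>v (y + t \<cdot>\<^sub>v z)) = a + 2*t*b + t^2*c"
      using y z Qy Qz zy unfolding a_def b_def c_def
      by (simp add: add_scalar_prod_distrib[of _ n] scalar_prod_add_distrib[of _ n] power2_eq_square algebra_simps)
    then show ?thesis using psd[OF v] by simp
  qed
  have c0: "c \<ge> 0" unfolding c_def using psd[OF z] .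
  show ?thesis
  proof (cases "c = 0")
    case True
    have "b = 0"
    proof (rule ccontr)
      assume "b \<noteq> 0"
      have "0 \<le> a + 2*(-(a+1)/(2*b))*b + (-(a+1)/(2*b))^2*c" by (rule quad)
      with True \<open>b \<noteq> 0\<close> show False by (simp add: field_simps)
    qed
    then show ?thesis using True unfolding a_def b_def c_def by simp
  next
    case False
    with c0 have cp: "c > 0" by simp
    have "0 \<le> a + 2*(-b/c)*b + (-b/c)^2*c" by (rule quad)
    also have "\<dots> = a - b^2/c" using cp by (simp add: field_simps power2_eq_square)
    finally have "b^2 \<le> a * c" using cp by (simp add: field_simps)
    then show ?thesis unfolding a_def b_def c_def .
  qed
qed


lemma sym_max_eig:
  fixes S :: "real mat"
  assumes S: "S \<in> carrier_mat n n" and sym: "transpose_mat S = S" and n: "n > 0"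
  shows "\<exists>lam. eigenvalue S lam \<and> (\<forall>x\<in>carrier_vec n. x \<bullet> (S *\<^sub>v x) \<le> lam * (x \<bullet> x))"
proof -
  define C where "C = (\<Sum>i\<in>{0..<n}. \<Sum>j\<in>{0..<n}. \<bar>S$$(i,j)\<bar>)"
  define RQ where "RQ = {x \<bullet> (S *\<^sub>v x) / (x \<bullet> x) | x. x \<in> carrier_vec n \<and> x \<noteq> 0\<^sub>v n}"
  have ne: "RQ \<noteq> {}"
  proof -
    have "unit_vec n 0 \<in> carrier_vec n" "unit_vec n 0 \<noteq> 0\<^sub>v n"
      using n by (auto simp: unit_vec_def intro!: exI[of _ 0] dest!: arg_cong[where f="\<lambda>v. v $ 0"])
    then show ?thesis unfolding RQ_def by blast
  qed
  have bdd: "r \<le> C" if rR: "r \<in> RQ" for r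
  proof -
    obtain x where x: "x \<in> carrier_vec n" "x \<noteq> 0\<^sub>v n" and r: "r = x \<bullet> (S *\<^sub>v x) / (x \<bullet> x)"
      using rR unfolding RQ_def by blast
    have p: "0 < x \<bullet> x" using xx_pos x by blast
    have "x \<bullet> (S *\<^sub>v x) \<le> C * (x \<bullet> x)" using quad_bound[OF S x(1)] unfolding C_def by linarith
    then show ?thesis unfolding r using p by (simp add: divide_le_eq)
  qed
  then have bddA: "bdd_above RQ" by (rule bdd_aboveI)
  define lam where "lam = Sup RQ"
  have ray: "x \<bullet> (S *\<^sub>v x) \<le> lam * (x \<bullet> x)" if x: "x \<in> carrier_vec n" for x
  proof (cases "x = 0\<^sub>v n")
    case True
    then show ?thesis using S by simp
  next
    case False
    have p: "0 < x \<bullet> x" using xx_pos x False by blast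
    have "x \<bullet> (S *\<^sub>v x) / (x \<bullet> x) \<in> RQ" unfolding RQ_def using x False by blast
    then have "x \<bullet> (S *\<^sub>v x) / (x \<bullet> x) \<le> lam" unfolding lam_def by (rule cSup_upper[OF _ bddA])
    then show ?thesis using p by (simp add: divide_le_eq)
  qed
  define Q where "Q = lam \<cdot>\<^sub>m 1\<^sub>m n - S"
  have Q: "Q \<in> carrier_mat n n" unfolding Q_def using S by auto
  have Qv: "Q *\<^sub>v x = lam \<cdot>\<^sub>v x - S *\<^sub>v x" if x: "x \<in> carrier_vec n" for x
    unfolding Q_def using S x
    by (simp add: minus_mult_distrib_mat_vec[of _ n n] smult_mat_vec[of _ n n])
  have xQx: "x \<bullet> (Q *\<^sub>v x) = lam * (x \<bullet> x) - x \<bullet> (S *\<^sub>v x)" if x: "x \<in> carrier_vec n" for x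
    using Qv[OF x] x S by (simp add: scalar_prod_minus_distrib[of _ n])
  have psd: "0 \<le> x \<bullet> (Q *\<^sub>v x)" if x: "x \<in> carrier_vec n" for x
    using xQx[OF x] ray[OF x] by simp
  have symQ: "u \<bullet> (Q *\<^sub>v w) = (Q *\<^sub>v u) \<bullet> w" if u: "u \<in> carrier_vec n" and w: "w \<in> carrier_vec n" for u w
  proof -
    have "u \<bullet> (Q *\<^sub>v w) = lam * (u \<bullet> w) - u \<bullet> (S *\<^sub>v w)"
      using Qv[OF w] u w S by (simp add: scalar_prod_minus_distrib[of _ n])
    also have "\<dots> = lam * (u \<bullet> w) - (S *\<^sub>v u) \<bullet> w" using sym_sprod[OF S sym u w] by simp
    also have "\<dots> = (Q *\<^sub>v u) \<bullet> w"
      using Qv[OF u] u w S by (simp add: minus_scalar_prod_distrib[of _ n])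
    finally show ?thesis .
  qed
  show ?thesis
  proof (cases "det Q = 0")
    case True
    then obtain v where v: "v \<in> carrier_vec n" "v \<noteq> 0\<^sub>v n" "Q *\<^sub>v v = 0\<^sub>v n"
      using det_0_iff_vec_prod_zero[OF Q] by blast
    have "S *\<^sub>v v = lam \<cdot>\<^sub>v v"
    proof (rule eq_vecI)
      fix i assume i: "i < dim_vec (lam \<cdot>\<^sub>v v)"
      have "(Q *\<^sub>v v) $ i = 0" using v(3) i v(1) by simp
      then show "(S *\<^sub>v v) $ i = (lam \<cdot>\<^sub>v v) $ i" using Qv[OF v(1)] i v(1) S by simp
    qed (use S v in auto)
    then have "eigenvalue S lam" unfolding eigenvalue_def eigenvector_def using v S by auto
    then show ?thesis using ray by blast
  next
    case False
    have "Q \<in> Units (ring_mat TYPE(real) n n)" by (rule det_non_zero_imp_unit[OF Q False])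
    then obtain Y where "mat_inverse Q = Some Y"
      by (metis mat_inverse(1)[OF Q] option.exhaust)
    from mat_inverse(2)[OF Q this] have YQ: "Y * Q = 1\<^sub>m n" and Y: "Y \<in> carrier_mat n n" by auto
    obtain CY where CY: "CY \<ge> 0" "\<And>y. y \<in> carrier_vec n \<Longrightarrow> (Y *\<^sub>v y) \<bullet> (Y *\<^sub>v y) \<le> CY * (y \<bullet> y)"
      using norm_bound[OF Y] by blast
    define CQ where "CQ = (\<Sum>i\<in>{0..<n}. \<Sum>j\<in>{0..<n}. \<bar>Q$$(i,j)\<bar>)"
    have CQ0: "CQ \<ge> 0" unfolding CQ_def by (intro sum_nonneg) auto
    have key: "z \<bullet> z \<le> (CY * CQ) * (z \<bullet> (Q *\<^sub>v z))" if z: "z \<in> carrier_vec n" for z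
    proof -
      have Qz: "Q *\<^sub>v z \<in> carrier_vec n" using Q z by auto
      define G where "G = (Q *\<^sub>v z) \<bullet> (Q *\<^sub>v z)"
      have G0: "G \<ge> 0" unfolding G_def by (rule sprod_self_nonneg)
      have c0: "0 \<le> z \<bullet> (Q *\<^sub>v z)" by (rule psd[OF z])
      have "G^2 \<le> ((Q *\<^sub>v z) \<bullet> (Q *\<^sub>v (Q *\<^sub>v z))) * (z \<bullet> (Q *\<^sub>v z))"
        unfolding G_def by (rule psd_cs[OF Q symQ psd Qz z])
      also have "\<dots> \<le> (CQ * G) * (z \<bullet> (Q *\<^sub>v z))"
      proof (rule mult_right_mono[OF _ c0])
        show "(Q *\<^sub>v z) \<bullet> (Q *\<^sub>v (Q *\<^sub>v z)) \<le> CQ * G"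
          using quad_bound[OF Q Qz] unfolding CQ_def G_def by linarith
      qed
      finally have G2: "G^2 \<le> CQ * G * (z \<bullet> (Q *\<^sub>v z))" .
      have GQ: "G \<le> CQ * (z \<bullet> (Q *\<^sub>v z))"
      proof (cases "G = 0")
        case True then show ?thesis using CQ0 c0 by simp
      next
        case False
        with G0 have "G > 0" by simp
        with G2 show ?thesis by (simp add: power2_eq_square mult.assoc)
      qed
      have "z = (Y * Q) *\<^sub>v z" using YQ z by simp
      also have "\<dots> = Y *\<^sub>v (Q *\<^sub>v z)" using Y Q z by simp
      finally have "z \<bullet> z = (Y *\<^sub>v (Q *\<^sub>v z)) \<bullet> (Y *\<^sub>v (Q *\<^sub>v z))" by simp
      also have "\<dots> \<le> CY * G" unfolding G_def by (rule CY(2)[OF Qz])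
      also have "\<dots> \<le> CY * (CQ * (z \<bullet> (Q *\<^sub>v z)))" by (rule mult_left_mono[OF GQ CY(1)])
      finally show ?thesis by (simp add: mult.assoc)
    qed
    define K where "K = CY * CQ"
    have K0: "K \<ge> 0" unfolding K_def using CY(1) CQ0 by simp
    have bnd: "r \<le> lam - 1/(K+1)" if "r \<in> RQ" for r
    proof -
      obtain x where x: "x \<in> carrier_vec n" "x \<noteq> 0\<^sub>v n" and r: "r = x \<bullet> (S *\<^sub>v x) / (x \<bullet> x)"
        using \<open>r \<in> RQ\<close> unfolding RQ_def by blast
      have p: "0 < x \<bullet> x" using xx_pos x by blast
      have k: "x \<bullet> x \<le> K * (x \<bullet> (Q *\<^sub>v x))" using key[OF x(1)] unfolding K_def .
      have c0: "0 \<le> x \<bullet> (Q *\<^sub>v x)" by (rule psd[OF x(1)])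
      have "x \<bullet> x \<le> (K+1) * (x \<bullet> (Q *\<^sub>v x))" using k c0 by (simp add: algebra_simps)
      then have "(x \<bullet> x) / (K+1) \<le> x \<bullet> (Q *\<^sub>v x)" using K0 by (simp add: divide_le_eq mult.commute)
      then have "x \<bullet> (S *\<^sub>v x) \<le> lam * (x \<bullet> x) - (x \<bullet> x) / (K+1)" using xQx[OF x(1)] by simp
      also have "\<dots> = (lam - 1/(K+1)) * (x \<bullet> x)" by (simp add: algebra_simps)
      finally show ?thesis unfolding r using p by (simp add: divide_le_eq)
    qed
    have "lam \<le> lam - 1/(K+1)" unfolding lam_def by (rule cSup_least[OF ne]) (use bnd lam_def in auto)
    moreover have "1/(K+1) > 0" using K0 by simp
    ultimately show ?thesis by simp
  qed
qed


lemma eig_le_lambda_max: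
  fixes S :: "real mat"
  assumes S: "S \<in> carrier_mat n n" and e: "eigenvalue S l"
  shows "l \<le> lambda_max S"
proof -
  have "char_poly S \<noteq> 0"
  proof
    assume "char_poly S = 0"
    then show False using degree_monic_char_poly[OF S] by simp
  qed
  then have "finite {l. poly (char_poly S) l = 0}" by (rule poly_roots_finite)
  moreover have "{l. eigenvalue S l} = {l. poly (char_poly S) l = 0}"
    using eigenvalue_root_char_poly[OF S] by blast
  ultimately have "finite {l. eigenvalue S l}" by simp
  then show ?thesis unfolding lambda_max_def using e by (intro Max_ge) auto
qed

lemma sprod_expand:
  fixes a b :: "real vec"
  assumes a: "a \<in> carrier_vec n" and b: "b \<in> carrier_vec n"
  shows "(a - t \<cdot>\<^sub>v b) \<bullet> (a - t \<cdot>\<^sub>v b) = a \<bullet> a - 2 * t * (a \<bullet> b) + t^2 * (b \<bullet> b)"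
proof -
  have tb: "t \<cdot>\<^sub>v b \<in> carrier_vec n" using b by simp
  have "(a - t \<cdot>\<^sub>v b) \<bullet> (a - t \<cdot>\<^sub>v b) = a \<bullet> (a - t \<cdot>\<^sub>v b) - (t \<cdot>\<^sub>v b) \<bullet> (a - t \<cdot>\<^sub>v b)"
    using a tb by (simp add: minus_scalar_prod_distrib[of _ n])
  also have "\<dots> = a \<bullet> a - t * (a \<bullet> b) - (t * (b \<bullet> a) - t * t * (b \<bullet> b))"
    using a b tb by (simp add: scalar_prod_minus_distrib[of _ n])
  also have "b \<bullet> a = a \<bullet> b" using comm_scalar_prod[OF b a] .
  finally show ?thesis by (simp add: power2_eq_square algebra_simps)
qed

lemma Kapply:
  fixes A :: "real mat"
  assumes A: "A \<in> carrier_mat n n" and u: "u \<in> carrier_vec n"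
  shows "(1\<^sub>m n - \<omega> \<cdot>\<^sub>m ((1/d) \<cdot>\<^sub>m 1\<^sub>m n * A)) *\<^sub>v u = u - (\<omega>/d) \<cdot>\<^sub>v (A *\<^sub>v u)"
proof -
  have D: "(1/d) \<cdot>\<^sub>m 1\<^sub>m n * A = (1/d) \<cdot>\<^sub>m A"
    using A by (simp add: mult_smult_assoc_mat[of _ n n _ n])
  show ?thesis unfolding D using A u
    by (simp add: minus_mult_distrib_mat_vec[of _ n n] smult_mat_vec[of _ n n] smult_smult_assoc)
qed

lemma smoothing:
  fixes A :: "real mat"
  assumes A: "A \<in> carrier_mat n n" and sym: "transpose_mat A = A" and d: "d > 0"
    and spec: "\<And>u. u \<in> carrier_vec n \<Longrightarrow> u \<bullet> (A *\<^sub>v u) \<le> \<eta>0 * d * (u \<bullet> u)"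
    and eta: "\<eta> \<le> \<omega> * (2 - \<omega> * \<eta>0)"
    and u: "u \<in> carrier_vec n"
  shows "((1\<^sub>m n - \<omega> \<cdot>\<^sub>m ((1/d) \<cdot>\<^sub>m 1\<^sub>m n * A)) *\<^sub>v u) \<bullet> (A *\<^sub>v ((1\<^sub>m n - \<omega> \<cdot>\<^sub>m ((1/d) \<cdot>\<^sub>m 1\<^sub>m n * A)) *\<^sub>v u))
     \<le> u \<bullet> (A *\<^sub>v u) - (\<eta>/d) * ((A *\<^sub>v u) \<bullet> (A *\<^sub>v u))"
proof -
  define s where "s = \<omega>/d"
  define y where "y = A *\<^sub>v u"
  have y: "y \<in> carrier_vec n" unfolding y_def using A u by simp
  have sy: "s \<cdot>\<^sub>v y \<in> carrier_vec n" using y by simp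
  have Ay: "A *\<^sub>v y \<in> carrier_vec n" using A y by simp
  have K: "(1\<^sub>m n - \<omega> \<cdot>\<^sub>m ((1/d) \<cdot>\<^sub>m 1\<^sub>m n * A)) *\<^sub>v u = u - s \<cdot>\<^sub>v y"
    unfolding s_def y_def by (rule Kapply[OF A u])
  have AK: "A *\<^sub>v (u - s \<cdot>\<^sub>v y) = y - s \<cdot>\<^sub>v (A *\<^sub>v y)"
    using A u y by (simp add: mult_minus_distrib_mat_vec[of _ n n] mult_mat_vec y_def)
  have uAy: "u \<bullet> (A *\<^sub>v y) = y \<bullet> y" using sym_sprod[OF A sym u y] unfolding y_def .
  have "(u - s \<cdot>\<^sub>v y) \<bullet> (y - s \<cdot>\<^sub>v (A *\<^sub>v y))
      = u \<bullet> (y - s \<cdot>\<^sub>v (A *\<^sub>v y)) - (s \<cdot>\<^sub>v y) \<bullet> (y - s \<cdot>\<^sub>v (A *\<^sub>v y))"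
    using u sy y Ay by (simp add: minus_scalar_prod_distrib[of _ n])
  also have "\<dots> = (u \<bullet> y - s * (u \<bullet> (A *\<^sub>v y))) - (s * (y \<bullet> y) - s * s * (y \<bullet> (A *\<^sub>v y)))"
    using u sy y Ay by (simp add: scalar_prod_minus_distrib[of _ n])
  finally have E: "(u - s \<cdot>\<^sub>v y) \<bullet> (y - s \<cdot>\<^sub>v (A *\<^sub>v y)) = u \<bullet> y - 2 * s * (y \<bullet> y) + s^2 * (y \<bullet> (A *\<^sub>v y))"
    unfolding uAy by (simp add: power2_eq_square algebra_simps)
  have yy: "0 \<le> y \<bullet> y" by (rule sprod_self_nonneg)
  have "s^2 * (y \<bullet> (A *\<^sub>v y)) \<le> s^2 * (\<eta>0 * d * (y \<bullet> y))"
    by (rule mult_left_mono[OF spec[OF y]]) simp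
  also have "s^2 * (\<eta>0 * d * (y \<bullet> y)) = (\<omega> * \<omega> * \<eta>0 / d) * (y \<bullet> y)"
    unfolding s_def using d by (simp add: power2_eq_square field_simps)
  finally have X: "s^2 * (y \<bullet> (A *\<^sub>v y)) \<le> (\<omega> * \<omega> * \<eta>0 / d) * (y \<bullet> y)" .
  have I: "(\<omega> * (2 - \<omega> * \<eta>0) / d) * (y \<bullet> y) = 2 * s * (y \<bullet> y) - (\<omega> * \<omega> * \<eta>0 / d) * (y \<bullet> y)"
    unfolding s_def using d by (simp add: field_simps)
  have "(\<eta>/d) * (y \<bullet> y) \<le> (\<omega> * (2 - \<omega> * \<eta>0) / d) * (y \<bullet> y)"
    by (rule mult_right_mono[OF _ yy]) (use eta d in \<open>simp add: divide_right_mono\<close>)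
  then have "u \<bullet> y - 2 * s * (y \<bullet> y) + s^2 * (y \<bullet> (A *\<^sub>v y)) \<le> u \<bullet> y - (\<eta>/d) * (y \<bullet> y)"
    using X I by linarith
  then show ?thesis unfolding y_def[symmetric] K AK E .
qed


lemma twogrid:
  fixes A R X :: "real mat"
  assumes A: "A \<in> carrier_mat n n" and sym: "transpose_mat A = A" and d: "d > 0"
    and spec: "\<And>u. u \<in> carrier_vec n \<Longrightarrow> u \<bullet> (A *\<^sub>v u) \<le> \<eta>0 * d * (u \<bullet> u)"
    and psd: "\<And>u. u \<in> carrier_vec n \<Longrightarrow> 0 \<le> u \<bullet> (A *\<^sub>v u)"
    and R: "R \<in> carrier_mat nc n" and P: "P = 2 \<cdot>\<^sub>m transpose_mat R"
    and X: "X \<in> carrier_mat nc nc" and RAPX: "(R * A * P) * X = 1\<^sub>m nc"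
    and approx: "\<And>e. e \<in> carrier_vec n \<Longrightarrow> \<exists>c\<in>carrier_vec nc.
        d * ((e - P *\<^sub>v c) \<bullet> (e - P *\<^sub>v c)) \<le> 4 * (e \<bullet> (A *\<^sub>v e))"
    and eta: "\<eta> \<le> \<omega> * (2 - \<omega> * \<eta>0)" and eta0: "0 \<le> \<eta>" and eta4: "\<eta> \<le> 4"
    and v: "v \<in> carrier_vec n"
  shows "(((1\<^sub>m n - \<omega> \<cdot>\<^sub>m ((1/d) \<cdot>\<^sub>m 1\<^sub>m n * A)) * (1\<^sub>m n - P * X * R * A)) *\<^sub>v v) \<bullet>
         (A *\<^sub>v (((1\<^sub>m n - \<omega> \<cdot>\<^sub>m ((1/d) \<cdot>\<^sub>m 1\<^sub>m n * A)) * (1\<^sub>m n - P * X * R * A)) *\<^sub>v v))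
     \<le> (1 - \<eta>/4) * (v \<bullet> (A *\<^sub>v v))"
proof -
  let ?K = "1\<^sub>m n - \<omega> \<cdot>\<^sub>m ((1/d) \<cdot>\<^sub>m 1\<^sub>m n * A)"
  have Pc: "P \<in> carrier_mat n nc" using P R by simp
  have Kc: "?K \<in> carrier_mat n n" using A by (intro minus_carrier_mat smult_carrier_mat mult_carrier_mat) auto
  define w where "w = R *\<^sub>v (A *\<^sub>v v)"
  have wc: "w \<in> carrier_vec nc" unfolding w_def using R A v by simp
  define y0 where "y0 = X *\<^sub>v w"
  have y0: "y0 \<in> carrier_vec nc" unfolding y0_def using X wc by simp
  define p where "p = P *\<^sub>v y0"
  have pc: "p \<in> carrier_vec n" unfolding p_def using Pc y0 by simp
  define e where "e = v - p"
  have ec: "e \<in> carrier_vec n" unfolding e_def using v pc by simp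
  have Tv: "(1\<^sub>m n - P * X * R * A) *\<^sub>v v = e"
  proof -
    have "(P * X * R * A) *\<^sub>v v = p"
    proof -
      have PX: "P * X \<in> carrier_mat n nc" using Pc X by simp
      have PXR: "P * X * R \<in> carrier_mat n n" using PX R by simp
      have "(P * X * R * A) *\<^sub>v v = (P * X * R) *\<^sub>v (A *\<^sub>v v)"
        by (rule assoc_mult_mat_vec[OF PXR A v])
      also have "\<dots> = (P * X) *\<^sub>v (R *\<^sub>v (A *\<^sub>v v))"
        by (rule assoc_mult_mat_vec[OF PX R]) (use A v in simp)
      also have "\<dots> = P *\<^sub>v (X *\<^sub>v (R *\<^sub>v (A *\<^sub>v v)))"
        by (rule assoc_mult_mat_vec[OF Pc X]) (use A v R in simp)
      finally show ?thesis unfolding p_def y0_def w_def .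
    qed
    moreover have "P * X * R * A \<in> carrier_mat n n"
      by (rule mult_carrier_mat[OF mult_carrier_mat[OF mult_carrier_mat[OF Pc X] R] A])
    ultimately show ?thesis unfolding e_def using v by (simp add: minus_mult_distrib_mat_vec[of _ n n])
  qed
  have Ap: "A *\<^sub>v p = (A * P) *\<^sub>v y0" unfolding p_def using A Pc y0 by simp
  have RAe: "R *\<^sub>v (A *\<^sub>v e) = 0\<^sub>v nc"
  proof -
    have "R *\<^sub>v (A *\<^sub>v e) = R *\<^sub>v (A *\<^sub>v v) - R *\<^sub>v (A *\<^sub>v p)"
      unfolding e_def using R A v pc
      by (simp add: mult_minus_distrib_mat_vec[of _ n n] mult_minus_distrib_mat_vec[of _ nc n])
    also have "R *\<^sub>v (A *\<^sub>v p) = ((R * A * P) * X) *\<^sub>v w"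
    proof -
      have RA: "R * A \<in> carrier_mat nc n" using R A by simp
      have RAP: "R * A * P \<in> carrier_mat nc nc" using RA Pc by simp
      have "((R * A * P) * X) *\<^sub>v w = (R * A * P) *\<^sub>v (X *\<^sub>v w)"
        by (rule assoc_mult_mat_vec[OF RAP X wc])
      also have "\<dots> = (R * A) *\<^sub>v (P *\<^sub>v (X *\<^sub>v w))"
        by (rule assoc_mult_mat_vec[OF RA Pc]) (use X wc in simp)
      also have "\<dots> = R *\<^sub>v (A *\<^sub>v (P *\<^sub>v (X *\<^sub>v w)))"
        by (rule assoc_mult_mat_vec[OF R A]) (use X wc Pc in simp)
      finally show ?thesis unfolding p_def y0_def by simp
    qed
    also have "\<dots> = w" unfolding RAPX using wc by simp
    finally show ?thesis unfolding w_def using wc w_def by simp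
  qed
  have Ae: "A *\<^sub>v e \<in> carrier_vec n" using A ec by simp
  have orth: "(P *\<^sub>v c) \<bullet> (A *\<^sub>v e) = 0" if c: "c \<in> carrier_vec nc" for c
  proof -
    have Rt: "transpose_mat R \<in> carrier_mat n nc" using R by simp
    have "P *\<^sub>v c = 2 \<cdot>\<^sub>v (transpose_mat R *\<^sub>v c)" unfolding P using Rt c by (rule smult_mat_vec)
    moreover have "transpose_mat R *\<^sub>v c \<in> carrier_vec n" using Rt c by simp
    ultimately have "(P *\<^sub>v c) \<bullet> (A *\<^sub>v e) = 2 * ((transpose_mat R *\<^sub>v c) \<bullet> (A *\<^sub>v e))"
      using smult_scalar_prod_distrib[of _ n "A *\<^sub>v e" 2] Ae by simp
    also have "(transpose_mat R *\<^sub>v c) \<bullet> (A *\<^sub>v e) = c \<bullet> (R *\<^sub>v (A *\<^sub>v e))"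
      by (rule transpose_vec_mult_scalar[OF R Ae c])
    also have "\<dots> = 0" unfolding RAe using c by simp
    finally show ?thesis by simp
  qed
  define E where "E = e \<bullet> (A *\<^sub>v e)"
  have Ev: "E \<le> v \<bullet> (A *\<^sub>v v)"
  proof -
    have vep: "v = e + p" unfolding e_def using v pc by (intro eq_vecI) auto
    have Apc: "A *\<^sub>v p \<in> carrier_vec n" using A pc by simp
    have "v \<bullet> (A *\<^sub>v v) = (e + p) \<bullet> (A *\<^sub>v e + A *\<^sub>v p)"
      using vep A ec pc by (simp add: mult_add_distrib_mat_vec[of _ n n])
    also have "\<dots> = e \<bullet> (A *\<^sub>v e) + e \<bullet> (A *\<^sub>v p) + (p \<bullet> (A *\<^sub>v e) + p \<bullet> (A *\<^sub>v p))"
      using ec pc Ae Apc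
      by (simp add: add_scalar_prod_distrib[of _ n] scalar_prod_add_distrib[of _ n])
    also have "e \<bullet> (A *\<^sub>v p) = (A *\<^sub>v e) \<bullet> p" by (rule sym_sprod[OF A sym ec pc])
    also have "\<dots> = p \<bullet> (A *\<^sub>v e)" by (rule comm_scalar_prod[OF Ae pc])
    also have "p \<bullet> (A *\<^sub>v e) = 0" unfolding p_def by (rule orth[OF y0])
    finally show ?thesis unfolding E_def using psd[OF pc] by simp
  qed
  define g where "g = A *\<^sub>v e"
  have gc: "g \<in> carrier_vec n" unfolding g_def by (rule Ae)
  obtain c where c: "c \<in> carrier_vec nc" and ap: "d * ((e - P *\<^sub>v c) \<bullet> (e - P *\<^sub>v c)) \<le> 4 * E"
    using approx[OF ec] unfolding E_def by blast
  define f where "f = e - P *\<^sub>v c"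
  have Pcc: "P *\<^sub>v c \<in> carrier_vec n" using Pc c by simp
  have fc: "f \<in> carrier_vec n" unfolding f_def using ec Pcc by simp
  have gf: "g \<bullet> f = E"
  proof -
    have "g \<bullet> f = g \<bullet> e - g \<bullet> (P *\<^sub>v c)" unfolding f_def using gc ec Pcc
      by (simp add: scalar_prod_minus_distrib[of _ n])
    also have "g \<bullet> (P *\<^sub>v c) = (P *\<^sub>v c) \<bullet> g" by (rule comm_scalar_prod[OF gc Pcc])
    also have "\<dots> = 0" unfolding g_def by (rule orth[OF c])
    also have "g \<bullet> e = E" unfolding E_def g_def by (rule comm_scalar_prod[OF Ae ec])
    finally show ?thesis by simp
  qed
  have E0: "0 \<le> E" unfolding E_def by (rule psd[OF ec])
  have gg: "(d/4) * E \<le> g \<bullet> g"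
  proof -
    have "0 \<le> (g - (d/4) \<cdot>\<^sub>v f) \<bullet> (g - (d/4) \<cdot>\<^sub>v f)" by (rule sprod_self_nonneg)
    also have "\<dots> = g \<bullet> g - 2 * (d/4) * E + (d/4)^2 * (f \<bullet> f)"
      using sprod_expand[OF gc fc] gf by simp
    finally have 1: "2 * (d/4) * E \<le> g \<bullet> g + (d/4)^2 * (f \<bullet> f)" by simp
    have "(d/4)^2 * (f \<bullet> f) = (d/16) * (d * (f \<bullet> f))" by (simp add: power2_eq_square)
    also have "\<dots> \<le> (d/16) * (4 * E)" using ap d unfolding f_def by (intro mult_left_mono) auto
    finally have 2: "(d/4)^2 * (f \<bullet> f) \<le> (d/4) * E" by (simp add: mult.commute)
    from 1 2 show ?thesis by simp
  qed
  have sm: "(?K *\<^sub>v e) \<bullet> (A *\<^sub>v (?K *\<^sub>v e)) \<le> E - (\<eta>/d) * (g \<bullet> g)"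
    unfolding E_def g_def by (rule smoothing[OF A sym d spec eta ec])
  have "(\<eta>/d) * ((d/4) * E) \<le> (\<eta>/d) * (g \<bullet> g)"
    by (rule mult_left_mono[OF gg]) (use eta0 d in simp)
  then have "(\<eta>/4) * E \<le> (\<eta>/d) * (g \<bullet> g)" using d by simp
  moreover have "(1 - \<eta>/4) * E = E - (\<eta>/4) * E" by (simp add: algebra_simps)
  ultimately have "(?K *\<^sub>v e) \<bullet> (A *\<^sub>v (?K *\<^sub>v e)) \<le> (1 - \<eta>/4) * E" using sm by linarith
  also have "\<dots> \<le> (1 - \<eta>/4) * (v \<bullet> (A *\<^sub>v v))" by (rule mult_left_mono[OF Ev]) (use eta4 in simp)
  finally have fin: "(?K *\<^sub>v e) \<bullet> (A *\<^sub>v (?K *\<^sub>v e)) \<le> (1 - \<eta>/4) * (v \<bullet> (A *\<^sub>v v))" .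
  have "(?K * (1\<^sub>m n - P * X * R * A)) *\<^sub>v v = ?K *\<^sub>v e"
    using assoc_mult_mat_vec[OF Kc _ v, of "1\<^sub>m n - P * X * R * A"] Tv
      mult_carrier_mat[OF mult_carrier_mat[OF mult_carrier_mat[OF Pc X] R] A]
    by (simp add: minus_carrier_mat)
  then show ?thesis using fin by simp
qed



definition bf :: "real \<Rightarrow> nat \<Rightarrow> nat \<Rightarrow> real" where
  "bf N a b = (if a = b then 2 * N / 3 - 1 else if a = b + 1 \<or> b = a + 1 then N / 6 - 1 else -1)"

lemma Bmat_carrier: "Bmat k \<in> carrier_mat (nlev k) (nlev k)"
  unfolding Bmat_def nlev_def Let_def by simp

lemma Bmat_entry: "a < nlev k \<Longrightarrow> b < nlev k \<Longrightarrow> Bmat k $$ (a,b) = bf (2^k) a b"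
  unfolding Bmat_def nlev_def Let_def bf_def by simp

lemma restr_carrier: "restr k \<in> carrier_mat (nlev (k-1)) (nlev k)"
  unfolding restr_def by simp

lemma prolong_carrier: "prolong k \<in> carrier_mat (nlev k) (nlev (k-1))"
  unfolding prolong_def using restr_carrier by simp

lemma restr_entry: "i < nlev (k-1) \<Longrightarrow> t < nlev k \<Longrightarrow> restr k $$ (i,t) =
   (if t = 2 * i then 1/4 else if t = 2 * i + 1 then 1/2 else if t = 2 * i + 2 then 1/4 else 0)"
  unfolding restr_def by simp

lemma prolong_entry: "t < nlev k \<Longrightarrow> i < nlev (k-1) \<Longrightarrow> prolong k $$ (t,i) =
   (if t = 2 * i then 1/2 else if t = 2 * i + 1 then 1 else if t = 2 * i + 2 then 1/2 else 0)"
  unfolding prolong_def using restr_carrier[of k] by (simp add: restr_entry)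

lemma nlev_rec: "k \<ge> 1 \<Longrightarrow> nlev k = 2 * nlev (k-1) + 1"
proof -
  assume k: "k \<ge> 1"
  then obtain j where j: "k = Suc j" by (cases k) auto
  have h: "(1::nat) \<le> 2^j" by simp
  show ?thesis unfolding nlev_def j power_Suc diff_Suc_1 using h by arith
qed

lemma sum3:
  fixes g :: "nat \<Rightarrow> real"
  assumes "p + 2 < n"
  shows "(\<Sum>t\<in>{0..<n}. (if t = p then u else if t = p + 1 then v else if t = p + 2 then w else 0) * g t)
         = u * g p + v * g (p+1) + w * g (p+2)"
proof -
  have "(\<Sum>t\<in>{0..<n}. (if t = p then u else if t = p + 1 then v else if t = p + 2 then w else 0) * g t)
     = (\<Sum>t\<in>{0..<n}. (if t = p then u * g p else 0) + (if t = p + 1 then v * g (p+1) else 0)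
            + (if t = p + 2 then w * g (p+2) else 0))"
    by (rule sum.cong) auto
  also have "\<dots> = u * g p + v * g (p+1) + w * g (p+2)"
    using assms by (simp add: sum.distrib)
  finally show ?thesis .
qed

lemma RM_entry:
  fixes M :: "real mat"
  assumes k: "k \<ge> 1" and M: "M \<in> carrier_mat (nlev k) nc" and i: "i < nlev (k-1)" and j: "j < nc"
  shows "(restr k * M) $$ (i,j) = M $$ (2*i, j) / 4 + M $$ (2*i+1, j) / 2 + M $$ (2*i+2, j) / 4"
proof -
  have lt: "2*i + 2 < nlev k" using nlev_rec[OF k] i by simp
  have "(restr k * M) $$ (i,j) = (\<Sum>t\<in>{0..<nlev k}. restr k $$ (i,t) * M $$ (t,j))"
    using M i j restr_carrier[of k] by (simp add: scalar_prod_def)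
  also have "\<dots> = (\<Sum>t\<in>{0..<nlev k}. (if t = 2 * i then 1/4 else if t = 2 * i + 1 then 1/2
        else if t = 2 * i + 2 then 1/4 else 0) * M $$ (t,j))"
    using i by (intro sum.cong) (auto simp: restr_entry)
  also have "\<dots> = M $$ (2*i, j) / 4 + M $$ (2*i+1, j) / 2 + M $$ (2*i+2, j) / 4"
    using sum3[OF lt, of "1/4" "1/2" "1/4" "\<lambda>t. M $$ (t,j)"] by simp
  finally show ?thesis .
qed

lemma MP_entry:
  fixes M :: "real mat"
  assumes k: "k \<ge> 1" and M: "M \<in> carrier_mat nr (nlev k)" and i: "i < nr" and j: "j < nlev (k-1)"
  shows "(M * prolong k) $$ (i,j) = M $$ (i, 2*j) / 2 + M $$ (i, 2*j+1) + M $$ (i, 2*j+2) / 2"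
proof -
  have lt: "2*j + 2 < nlev k" using nlev_rec[OF k] j by simp
  have "(M * prolong k) $$ (i,j) = (\<Sum>t\<in>{0..<nlev k}. prolong k $$ (t,j) * M $$ (i,t))"
    using M i j prolong_carrier[of k] by (simp add: scalar_prod_def mult.commute)
  also have "\<dots> = (\<Sum>t\<in>{0..<nlev k}. (if t = 2 * j then 1/2 else if t = 2 * j + 1 then 1
        else if t = 2 * j + 2 then 1/2 else 0) * M $$ (i,t))"
    using j by (intro sum.cong) (auto simp: prolong_entry)
  also have "\<dots> = M $$ (i, 2*j) / 2 + M $$ (i, 2*j+1) + M $$ (i, 2*j+2) / 2"
    using sum3[OF lt, of "1/2" 1 "1/2" "\<lambda>t. M $$ (i,t)"] by simp
  finally show ?thesis .
qed

lemma galerkin_entry: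
  fixes N :: real and i j :: nat
  shows "(bf (2*N) (2*i) (2*j) / 4 + bf (2*N) (2*i+1) (2*j) / 2 + bf (2*N) (2*i+2) (2*j) / 4) / 2
       + (bf (2*N) (2*i) (2*j+1) / 4 + bf (2*N) (2*i+1) (2*j+1) / 2 + bf (2*N) (2*i+2) (2*j+1) / 4)
       + (bf (2*N) (2*i) (2*j+2) / 4 + bf (2*N) (2*i+1) (2*j+2) / 2 + bf (2*N) (2*i+2) (2*j+2) / 4) / 2
       = 2 * bf N i j"
proof -
  consider "i = j" | "i = j + 1" | "j = i + 1" | "i \<noteq> j \<and> i \<noteq> j + 1 \<and> j \<noteq> i + 1" by blast
  then show ?thesis
  proof cases
    case 1 then show ?thesis by (simp add: bf_def field_simps)
  next
    case 2 then show ?thesis by (simp add: bf_def field_simps)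
  next
    case 3 then show ?thesis by (simp add: bf_def field_simps)
  next
    case 4
    then have "bf M (2*i+s) (2*j+t) = -1" if "s \<le> 2" "t \<le> 2" for M s t
      using that unfolding bf_def by auto
    from this[of 0 0] this[of 0 1] this[of 0 2] this[of 1 0] this[of 1 1] this[of 1 2]
      this[of 2 0] this[of 2 1] this[of 2 2] 4 show ?thesis
      by (simp add: bf_def)
  qed
qed


lemma galerkin:
  assumes k: "k \<ge> 2"
  shows "restr k * Bmat k * prolong k = 2 \<cdot>\<^sub>m Bmat (k-1)"
proof (rule eq_matI)
  have k1: "k \<ge> 1" using k by simp
  have RB: "restr k * Bmat k \<in> carrier_mat (nlev (k-1)) (nlev k)"
    using restr_carrier[of k] Bmat_carrier[of k] by simp
  show "dim_row (restr k * Bmat k * prolong k) = dim_row (2 \<cdot>\<^sub>m Bmat (k-1))"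
    using restr_carrier[of k] Bmat_carrier[of "k-1"] by simp
  show "dim_col (restr k * Bmat k * prolong k) = dim_col (2 \<cdot>\<^sub>m Bmat (k-1))"
    using prolong_carrier[of k] Bmat_carrier[of "k-1"] by simp
  fix i j assume i: "i < dim_row (2 \<cdot>\<^sub>m Bmat (k-1))" and j: "j < dim_col (2 \<cdot>\<^sub>m Bmat (k-1))"
  then have i: "i < nlev (k-1)" and j: "j < nlev (k-1)" using Bmat_carrier[of "k-1"] by auto
  have lti: "2*i+2 < nlev k" and ltj: "2*j+2 < nlev k" using nlev_rec[OF k1] i j by auto
  have N: "(2::real)^k = 2 * 2^(k-1)" using k1 by (cases k) auto
  have e: "(restr k * Bmat k) $$ (i,t) = bf (2^k) (2*i) t / 4 + bf (2^k) (2*i+1) t / 2 + bf (2^k) (2*i+2) t / 4"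
    if t: "t < nlev k" for t
    using RM_entry[OF k1 Bmat_carrier i t] lti t by (simp add: Bmat_entry)
  have "(restr k * Bmat k * prolong k) $$ (i,j) = (restr k * Bmat k) $$ (i, 2*j) / 2
      + (restr k * Bmat k) $$ (i, 2*j+1) + (restr k * Bmat k) $$ (i, 2*j+2) / 2"
    by (rule MP_entry[OF k1 RB i j])
  also have "\<dots> = 2 * bf (2^(k-1)) i j"
  proof -
    have e1: "(restr k * Bmat k) $$ (i,2*j) = bf (2^k) (2*i) (2*j) / 4 + bf (2^k) (2*i+1) (2*j) / 2 + bf (2^k) (2*i+2) (2*j) / 4"
      by (rule e) (use ltj in simp)
    have e2: "(restr k * Bmat k) $$ (i,2*j+1) = bf (2^k) (2*i) (2*j+1) / 4 + bf (2^k) (2*i+1) (2*j+1) / 2 + bf (2^k) (2*i+2) (2*j+1) / 4"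
      by (rule e) (use ltj in simp)
    have e3: "(restr k * Bmat k) $$ (i,2*j+2) = bf (2^k) (2*i) (2*j+2) / 4 + bf (2^k) (2*i+1) (2*j+2) / 2 + bf (2^k) (2*i+2) (2*j+2) / 4"
      by (rule e) (use ltj in simp)
    show ?thesis unfolding e1 e2 e3 N by (rule galerkin_entry)
  qed
  also have "\<dots> = (2 \<cdot>\<^sub>m Bmat (k-1)) $$ (i,j)" using i j Bmat_carrier[of "k-1"] by (simp add: Bmat_entry)
  finally show "(restr k * Bmat k * prolong k) $$ (i,j) = (2 \<cdot>\<^sub>m Bmat (k-1)) $$ (i,j)" .
qed

lemma smult_smult_mat: "a \<cdot>\<^sub>m (c \<cdot>\<^sub>m (M :: real mat)) = (a * c) \<cdot>\<^sub>m M"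
  by (rule eq_matI) auto

lemma Agal_form:
  assumes "d < q"
  shows "Agal q b d = ((b / 2^q)^2 * 2^d) \<cdot>\<^sub>m Bmat (q - d)"
  using assms
proof (induction d)
  case 0 then show ?case by simp
next
  case (Suc d)
  then have IH: "Agal q b d = ((b / 2^q)^2 * 2^d) \<cdot>\<^sub>m Bmat (q - d)" by simp
  have k: "q - d \<ge> 2" using Suc.prems by simp
  have "Agal q b (Suc d) = restr (q-d) * (((b / 2^q)^2 * 2^d) \<cdot>\<^sub>m Bmat (q - d)) * prolong (q-d)"
    using IH by simp
  also have "\<dots> = ((b / 2^q)^2 * 2^d) \<cdot>\<^sub>m (restr (q-d) * Bmat (q - d) * prolong (q-d))"
    using restr_carrier[of "q-d"] Bmat_carrier[of "q-d"] prolong_carrier[of "q-d"]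
    by (simp add: mult_smult_distrib[of _ "nlev (q-d-1)" "nlev (q-d)" _ "nlev (q-d)"]
        mult_smult_assoc_mat[of _ "nlev (q-d-1)" "nlev (q-d)" _ "nlev (q-d-1)"])
  also have "\<dots> = ((b / 2^q)^2 * 2^(Suc d)) \<cdot>\<^sub>m Bmat (q - Suc d)"
    unfolding galerkin[OF k] smult_smult_mat by (simp add: mult.assoc mult.commute)
  finally show ?case .
qed

lemma Alev_form:
  assumes "1 \<le> k" "k \<le> q"
  shows "Alev q b k = ((b / 2^q)^2 * 2^(q-k)) \<cdot>\<^sub>m Bmat k"
  unfolding Alev_def using Agal_form[of "q-k" q b] assms by simp

lemma Alev_pred:
  assumes "1 \<le> k" "k \<le> q"
  shows "Alev q b (k-1) = restr k * Alev q b k * prolong k"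
proof -
  have "q - (k-1) = Suc (q - k)" using assms by simp
  then show ?thesis unfolding Alev_def using assms by simp
qed



definition S2 :: "(nat \<Rightarrow> real) \<Rightarrow> nat \<Rightarrow> real" where
  "S2 x N = (\<Sum>t<N. ((x t)^2 + x t * x (Suc t) + (x (Suc t))^2) / 3)"

lemma pair_sum: fixes m :: nat and g :: "nat \<Rightarrow> real" shows "(\<Sum>t<2*m. g t) = (\<Sum>j<m. g (2*j) + g (2*j+1))"
  by (induction m) (simp_all add: algebra_simps)

lemma aux6: fixes L X Y :: real shows "6*L - X = Y \<Longrightarrow> 0 \<le> Y \<Longrightarrow> X/6 \<le> L" by linarith

lemma quad_term: fixes a b c :: real
  shows "(b - (a + c)/2)^2 / 6 \<le> (a^2 + a*b + b^2)/3 + (b^2 + b*c + c^2)/3"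
proof -
  have "6 * ((a^2 + a*b + b^2)/3 + (b^2 + b*c + c^2)/3) - (b - (a + c)/2)^2
      = 3 * (b + (a+c)/2)^2 + (a - c)^2"
    by (simp add: power2_eq_square field_simps)
  moreover have "0 \<le> 3 * (b + (a+c)/2)^2 + (a - c)^2" by simp
  ultimately show ?thesis by (rule aux6)
qed

lemma q_nonneg: fixes a b :: real shows "0 \<le> (a^2 + a*b + b^2)/3"
proof -
  have "a^2 + a*b + b^2 = (a + b/2)^2 + 3*b^2/4" by (simp add: power2_eq_square field_simps)
  moreover have "0 \<le> (a + b/2)^2 + 3*b^2/4" by simp
  ultimately show ?thesis by simp
qed

lemma q_nonneg': fixes a b :: real shows "0 \<le> a^2 + a*b + b^2"
  using q_nonneg[of a b] by simp

lemma q_zero: fixes a b :: real assumes "(a^2 + a*b + b^2)/3 = 0" shows "a = 0"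
proof -
  have e: "a^2 + a*b + b^2 = (a + b/2)^2 + 3*b^2/4" by (simp add: power2_eq_square field_simps)
  have "(a + b/2)^2 + 3*b^2/4 = 0" using assms e by simp
  moreover have "0 \<le> (a + b/2)^2" "0 \<le> 3*b^2/4" by simp_all
  ultimately have "b^2 = 0" "(a + b/2)^2 = 0" by linarith+
  then show ?thesis by simp
qed

lemma shift_sum:
  fixes x :: "nat \<Rightarrow> real"
  assumes "x 0 = 0" "x N = 0"
  shows "(\<Sum>t<N. x (Suc t)) = (\<Sum>t<N. x t)"
proof -
  have "(\<Sum>t<Suc N. x t) = x 0 + (\<Sum>t<N. x (Suc t))" by (rule sum.lessThan_Suc_shift)
  moreover have "(\<Sum>t<Suc N. x t) = (\<Sum>t<N. x t) + x N" by simp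
  ultimately show ?thesis using assms by simp
qed

lemma S2_shift:
  fixes x :: "nat \<Rightarrow> real"
  assumes x0: "x 0 = 0" and xN: "x N = 0" and N: "N > 0"
  shows "real N * S2 (\<lambda>t. x t - (\<Sum>t<N. x t) / N) N = real N * S2 x N - (\<Sum>t<N. x t)^2"
proof -
  define s where "s = (\<Sum>t<N. x t)"
  define u where "u = s / N"
  have pt: "((x t - u)^2 + (x t - u) * (x (Suc t) - u) + (x (Suc t) - u)^2) / 3
      = ((x t)^2 + x t * x (Suc t) + (x (Suc t))^2) / 3 - u * x t - u * x (Suc t) + u^2" for t
    by (simp add: power2_eq_square field_simps)
  have "S2 (\<lambda>t. x t - u) N = S2 x N - u * s - u * (\<Sum>t<N. x (Suc t)) + N * u^2"
    unfolding S2_def pt s_def by (simp add: sum.distrib sum_subtractf sum_distrib_left)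
  also have "(\<Sum>t<N. x (Suc t)) = s" unfolding s_def by (rule shift_sum[OF x0 xN])
  finally have "S2 (\<lambda>t. x t - u) N = S2 x N - 2 * u * s + N * u^2" by simp
  then have "real N * S2 (\<lambda>t. x t - u) N = real N * S2 x N - s^2"
    unfolding u_def using N by (simp add: power2_eq_square field_simps)
  then show ?thesis unfolding u_def s_def .
qed

lemma Sform:
  fixes x :: "nat \<Rightarrow> real"
  assumes x0: "x 0 = 0" and xN: "x (2*m) = 0" and m: "m \<ge> 1"
  shows "(real (2*m) / 6) * (\<Sum>j<m. (x (2*j+1) - (x (2*j) + x (2*j+2))/2)^2)
           \<le> real (2*m) * S2 x (2*m) - (\<Sum>t<2*m. x t)^2"
proof -
  define u where "u = (\<Sum>t<2*m. x t) / real (2*m)"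
  define w where "w = (\<lambda>t. x t - u)"
  have eq: "real (2*m) * S2 w (2*m) = real (2*m) * S2 x (2*m) - (\<Sum>t<2*m. x t)^2"
    unfolding w_def u_def by (rule S2_shift) (use x0 xN m in auto)
  have "S2 w (2*m) = (\<Sum>j<m. ((w (2*j))^2 + w (2*j) * w (2*j+1) + (w (2*j+1))^2) / 3
       + ((w (2*j+1))^2 + w (2*j+1) * w (2*j+2) + (w (2*j+2))^2) / 3)"
    unfolding S2_def by (subst pair_sum) (simp add: numeral_2_eq_2)
  also have "\<dots> \<ge> (\<Sum>j<m. (w (2*j+1) - (w (2*j) + w (2*j+2))/2)^2 / 6)"
    by (intro sum_mono quad_term)
  finally have "(\<Sum>j<m. (x (2*j+1) - (x (2*j) + x (2*j+2))/2)^2 / 6) \<le> S2 w (2*m)"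
    unfolding w_def by (simp add: field_simps)
  then have "real (2*m) * (\<Sum>j<m. (x (2*j+1) - (x (2*j) + x (2*j+2))/2)^2 / 6) \<le> real (2*m) * S2 w (2*m)"
    by (intro mult_left_mono) auto
  moreover have "real (2*m) * (\<Sum>j<m. (x (2*j+1) - (x (2*j) + x (2*j+2))/2)^2 / 6)
     = (real (2*m) / 6) * (\<Sum>j<m. (x (2*j+1) - (x (2*j) + x (2*j+2))/2)^2)"
    by (simp add: sum_divide_distrib[symmetric])
  ultimately show ?thesis using eq by linarith
qed

lemma Spd:
  fixes x :: "nat \<Rightarrow> real"
  assumes x0: "x 0 = 0" and xN: "x N = 0" and N: "N > 0"
    and z: "real N * S2 x N - (\<Sum>t<N. x t)^2 = 0"
  shows "t < N \<Longrightarrow> x t = 0"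
proof -
  define u where "u = (\<Sum>t<N. x t) / real N"
  define w where "w = (\<lambda>t. x t - u)"
  have "real N * S2 w N = 0" unfolding w_def u_def using S2_shift[OF x0 xN N] z by simp
  then have S0: "S2 w N = 0" using N by simp
  have all0: "((w t)^2 + w t * w (Suc t) + (w (Suc t))^2) / 3 = 0" if t: "t < N" for t
  proof -
    have "\<forall>t\<in>{..<N}. ((w t)^2 + w t * w (Suc t) + (w (Suc t))^2) / 3 = 0"
      using S0 unfolding S2_def by (subst sum_nonneg_eq_0_iff[symmetric]) (auto intro: q_nonneg q_nonneg')
    then show ?thesis using t by auto
  qed
  have w0: "w t = 0" if "t < N" for t using q_zero[OF all0[OF that]] .
  have "u = 0" using w0[OF N] x0 unfolding w_def by simp
  then show "t < N \<Longrightarrow> x t = 0" using w0 unfolding w_def by simp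
qed


definition xe :: "nat \<Rightarrow> real vec \<Rightarrow> nat \<Rightarrow> real" where
  "xe n e t = (if 0 < t \<and> t \<le> n then e $ (t-1) else 0)"

lemma sum_delta_pred:
  fixes g :: "nat \<Rightarrow> real"
  shows "(\<Sum>b\<in>{0..<n}. if b + 1 = a then g b else 0) = (if 0 < a \<and> a \<le> n then g (a-1) else 0)"
proof (cases "a = 0")
  case True then show ?thesis by simp
next
  case False
  have "(\<Sum>b\<in>{0..<n}. if b + 1 = a then g b else 0) = (\<Sum>b\<in>{0..<n}. if b = a - 1 then g b else 0)"
    by (intro sum.cong) (use False in auto)
  also have "\<dots> = (if a - 1 \<in> {0..<n} then g (a-1) else 0)" by (rule sum.delta) simp
  finally show ?thesis using False by auto
qed

lemma Brow:
  assumes e: "e \<in> carrier_vec (nlev k)" and a: "a < nlev k"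
  shows "(Bmat k *\<^sub>v e) $ a = (2 * 2^k / 3) * xe (nlev k) e (a+1)
      + (2^k / 6) * (xe (nlev k) e a + xe (nlev k) e (a+2)) - (\<Sum>b\<in>{0..<nlev k}. e $ b)"
proof -
  let ?n = "nlev k"
  let ?N = "(2::real)^k"
  have "(Bmat k *\<^sub>v e) $ a = (\<Sum>b\<in>{0..<?n}. Bmat k $$ (a,b) * e $ b)"
    using e a Bmat_carrier[of k] by (simp add: scalar_prod_def)
  also have "\<dots> = (\<Sum>b\<in>{0..<?n}. - e $ b + (if b = a then (2 * ?N / 3) * e $ b else 0)
      + (if b + 1 = a then (?N/6) * e $ b else 0) + (if b = a + 1 then (?N/6) * e $ b else 0))"
    using a by (intro sum.cong) (auto simp: Bmat_entry bf_def algebra_simps)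
  also have "\<dots> = - (\<Sum>b\<in>{0..<?n}. e $ b) + (2 * ?N / 3) * e $ a
      + (if 0 < a \<and> a \<le> ?n then (?N/6) * e $ (a-1) else 0)
      + (if a + 1 < ?n then (?N/6) * e $ (a+1) else 0)"
  proof -
    have d1: "(\<Sum>b\<in>{0..<?n}. if b = a then (2 * ?N / 3) * e $ b else 0) = (2 * ?N / 3) * e $ a"
      using a by simp
    have d2: "(\<Sum>b\<in>{0..<?n}. if b + 1 = a then (?N/6) * e $ b else 0) = (if 0 < a \<and> a \<le> ?n then (?N/6) * e $ (a-1) else 0)"
      by (rule sum_delta_pred)
    have d3: "(\<Sum>b\<in>{0..<?n}. if b = a + 1 then (?N/6) * e $ b else 0) = (if a + 1 < ?n then (?N/6) * e $ (a+1) else 0)"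
      by simp
    show ?thesis by (simp only: sum.distrib d1 d2 d3 sum_negf)
  qed
  also have "\<dots> = (2 * ?N / 3) * xe ?n e (a+1) + (?N / 6) * (xe ?n e a + xe ?n e (a+2)) - (\<Sum>b\<in>{0..<?n}. e $ b)"
    using a by (auto simp: xe_def algebra_simps)
  finally show ?thesis .
qed

lemma nlev_Suc: "Suc (nlev k) = 2^k"
  unfolding nlev_def by simp

lemma Bquad:
  assumes e: "e \<in> carrier_vec (nlev k)"
  shows "e \<bullet> (Bmat k *\<^sub>v e) = 2^k * S2 (xe (nlev k) e) (Suc (nlev k))
           - (\<Sum>t<Suc (nlev k). xe (nlev k) e t)^2"
proof -
  let ?n = "nlev k"
  let ?N = "(2::real)^k"
  define X where "X = xe ?n e"
  have X0: "X 0 = 0" and Xn: "X (Suc ?n) = 0" unfolding X_def xe_def by auto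
  have Xa: "e $ a = X (a+1)" if "a < ?n" for a using that unfolding X_def xe_def by auto
  define s where "s = (\<Sum>a<?n. X (a+1))"
  have s1: "(\<Sum>b\<in>{0..<?n}. e $ b) = s" unfolding s_def atLeast0LessThan using Xa by (intro sum.cong) auto
  have s2: "(\<Sum>t<Suc ?n. X t) = s" unfolding s_def sum.lessThan_Suc_shift using X0 by simp
  have "e \<bullet> (Bmat k *\<^sub>v e) = (\<Sum>a\<in>{0..<?n}. e $ a * (Bmat k *\<^sub>v e) $ a)"
    using e Bmat_carrier[of k] by (simp add: scalar_prod_def)
  also have "\<dots> = (\<Sum>a<?n. X (a+1) * ((2 * ?N / 3) * X (a+1) + (?N / 6) * (X a + X (a+2)) - s))"
    unfolding atLeast0LessThan using Xa Brow[OF e] s1 X_def by (intro sum.cong) auto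
  also have "\<dots> = (2 * ?N / 3) * (\<Sum>a<?n. X (a+1)^2) + (?N/6) * (\<Sum>a<?n. X a * X (a+1))
        + (?N/6) * (\<Sum>a<?n. X (a+1) * X (a+2)) - s * s"
  proof -
    have "(\<Sum>a<?n. X (a+1) * ((2 * ?N / 3) * X (a+1) + (?N / 6) * (X a + X (a+2)) - s))
      = (\<Sum>a<?n. (2 * ?N / 3) * X (a+1)^2 + (?N/6) * (X a * X (a+1)) + (?N/6) * (X (a+1) * X (a+2)) - s * X (a+1))"
      by (intro sum.cong) (simp_all add: power2_eq_square algebra_simps)
    also have "\<dots> = (2 * ?N / 3) * (\<Sum>a<?n. X (a+1)^2) + (?N/6) * (\<Sum>a<?n. X a * X (a+1))
        + (?N/6) * (\<Sum>a<?n. X (a+1) * X (a+2)) - s * (\<Sum>a<?n. X (a+1))"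
      by (simp only: sum.distrib sum_subtractf sum_distrib_left)
    finally show ?thesis unfolding s_def by simp
  qed
  finally have E: "e \<bullet> (Bmat k *\<^sub>v e) = (2 * ?N / 3) * (\<Sum>a<?n. X (a+1)^2) + (?N/6) * (\<Sum>a<?n. X a * X (a+1))
        + (?N/6) * (\<Sum>a<?n. X (a+1) * X (a+2)) - s * s" .
  have t1: "(\<Sum>t<Suc ?n. (X t)^2) = (\<Sum>a<?n. X (a+1)^2)" unfolding sum.lessThan_Suc_shift using X0 by simp
  have t2: "(\<Sum>t<Suc ?n. (X (Suc t))^2) = (\<Sum>a<?n. X (a+1)^2)" using Xn by simp
  have t3: "(\<Sum>t<Suc ?n. X t * X (Suc t)) = (\<Sum>a<?n. X a * X (a+1))" using Xn by simp
  have t4: "(\<Sum>t<Suc ?n. X t * X (Suc t)) = (\<Sum>a<?n. X (a+1) * X (a+2))" unfolding sum.lessThan_Suc_shift using X0 by simp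
  have S: "S2 X (Suc ?n) = ((\<Sum>t<Suc ?n. (X t)^2) + (\<Sum>t<Suc ?n. X t * X (Suc t)) + (\<Sum>t<Suc ?n. (X (Suc t))^2)) / 3"
    unfolding S2_def by (simp only: sum_divide_distrib[symmetric] sum.distrib)
  have t34: "(\<Sum>a<?n. X a * X (a+1)) = (\<Sum>a<?n. X (a+1) * X (a+2))" using t3 t4 by linarith
  show ?thesis unfolding X_def[symmetric] s2 E S t1 t2 t3 t34
    by (simp add: power2_eq_square algebra_simps)
qed


lemma pow_split: "k \<ge> 1 \<Longrightarrow> (2::nat)^k = 2 * 2^(k-1)"
  by (cases k) auto

lemma Bquad_ge:
  assumes k: "k \<ge> 1" and e: "e \<in> carrier_vec (nlev k)"
  shows "(2^k / 6) * (\<Sum>j<2^(k-1). (xe (nlev k) e (2*j+1) - (xe (nlev k) e (2*j) + xe (nlev k) e (2*j+2))/2)^2)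
     \<le> e \<bullet> (Bmat k *\<^sub>v e)"
proof -
  define m where "m = (2::nat)^(k-1)"
  have m1: "m \<ge> 1" unfolding m_def by simp
  have sn: "Suc (nlev k) = 2 * m" unfolding m_def nlev_Suc using pow_split[OF k] .
  have rN: "(2::real)^k = real (2*m)" using arg_cong[OF sn, of real] nlev_Suc[of k] by simp
  have x0: "xe (nlev k) e 0 = 0" and xN: "xe (nlev k) e (2*m) = 0" unfolding xe_def using sn by auto
  show ?thesis unfolding Bquad[OF e] sn rN m_def[symmetric]
    by (rule Sform[OF x0 xN m1])
qed

lemma B_psd:
  assumes k: "k \<ge> 1" and e: "e \<in> carrier_vec (nlev k)"
  shows "0 \<le> e \<bullet> (Bmat k *\<^sub>v e)"
proof -
  have "0 \<le> ((2::real)^k / 6) * (\<Sum>j<2^(k-1). (xe (nlev k) e (2*j+1) - (xe (nlev k) e (2*j) + xe (nlev k) e (2*j+2))/2)^2)"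
    by (intro mult_nonneg_nonneg sum_nonneg) auto
  then show ?thesis using Bquad_ge[OF k e] by linarith
qed

lemma B_pd:
  assumes k: "k \<ge> 1" and e: "e \<in> carrier_vec (nlev k)" and nz: "e \<noteq> 0\<^sub>v (nlev k)"
  shows "0 < e \<bullet> (Bmat k *\<^sub>v e)"
proof (rule ccontr)
  assume "\<not> 0 < e \<bullet> (Bmat k *\<^sub>v e)"
  with B_psd[OF k e] have z: "e \<bullet> (Bmat k *\<^sub>v e) = 0" by simp
  have rN: "(2::real)^k = real (Suc (nlev k))" using nlev_Suc[of k] by (metis of_nat_numeral of_nat_power)
  have x0: "xe (nlev k) e 0 = 0" and xN: "xe (nlev k) e (Suc (nlev k)) = 0" unfolding xe_def by auto
  have "real (Suc (nlev k)) * S2 (xe (nlev k) e) (Suc (nlev k)) - (\<Sum>t<Suc (nlev k). xe (nlev k) e t)^2 = 0"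
    using z unfolding Bquad[OF e] rN .
  from Spd[OF x0 xN _ this] have X: "t < Suc (nlev k) \<Longrightarrow> xe (nlev k) e t = 0" for t by simp
  have "e = 0\<^sub>v (nlev k)"
  proof (rule eq_vecI)
    fix a assume "a < dim_vec (0\<^sub>v (nlev k))"
    then have a: "a < nlev k" by simp
    have "e $ a = xe (nlev k) e (a+1)" unfolding xe_def using a by simp
    then show "e $ a = 0\<^sub>v (nlev k) $ a" using X[of "a+1"] a by simp
  qed (use e in simp)
  with nz show False by simp
qed


lemma prolong_apply:
  assumes k: "k \<ge> 1" and e: "e \<in> carrier_vec (nlev k)" and a: "a < nlev k"
  shows "(prolong k *\<^sub>v vec (nlev (k-1)) (\<lambda>i. e $ (2*i+1))) $ a
       = (if odd a then e $ a else (xe (nlev k) e a + xe (nlev k) e (a+2)) / 2)"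
proof -
  let ?nc = "nlev (k-1)"
  have n: "nlev k = 2 * ?nc + 1" by (rule nlev_rec[OF k])
  have "(prolong k *\<^sub>v vec ?nc (\<lambda>i. e $ (2*i+1))) $ a
      = (\<Sum>i\<in>{0..<?nc}. prolong k $$ (a,i) * e $ (2*i+1))"
    using a prolong_carrier[of k] by (simp add: scalar_prod_def)
  also have "\<dots> = (\<Sum>i\<in>{0..<?nc}. (if a = 2 * i then 1/2 else if a = 2 * i + 1 then 1
        else if a = 2 * i + 2 then 1/2 else 0) * e $ (2*i+1))"
    using a by (intro sum.cong) (auto simp: prolong_entry)
  also have "\<dots> = (if odd a then e $ a else (xe (nlev k) e a + xe (nlev k) e (a+2)) / 2)"
  proof (cases "odd a")
    case True
    then obtain j where j: "a = 2*j+1" by (metis oddE)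
    have jl: "j < ?nc" using a n j by simp
    have "(\<Sum>i\<in>{0..<?nc}. (if a = 2 * i then 1/2 else if a = 2 * i + 1 then 1
        else if a = 2 * i + 2 then 1/2 else 0) * e $ (2*i+1)) = (\<Sum>i\<in>{0..<?nc}. if i = j then e $ (2*i+1) else 0)"
      unfolding j by (intro sum.cong) auto
    also have "\<dots> = e $ a" using jl j by simp
    finally show ?thesis using True by simp
  next
    case False
    then obtain j where j: "a = 2*j" by (metis evenE)
    have jl: "j \<le> ?nc" using a n j by simp
    have "(\<Sum>i\<in>{0..<?nc}. (if a = 2 * i then 1/2 else if a = 2 * i + 1 then 1
        else if a = 2 * i + 2 then 1/2 else 0) * e $ (2*i+1))
      = (\<Sum>i\<in>{0..<?nc}. (if i = j then e $ (2*i+1) / 2 else 0) + (if i + 1 = j then e $ (2*i+1) / 2 else 0))"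
      unfolding j by (intro sum.cong) auto
    also have "\<dots> = (if j < ?nc then e $ (2*j+1) / 2 else 0) + (if 0 < j \<and> j \<le> ?nc then e $ (2*(j-1)+1) / 2 else 0)"
      by (simp only: sum.distrib sum_delta_pred[where g="\<lambda>i. e $ (2*i+1) / 2"]) simp
    also have "\<dots> = (xe (nlev k) e a + xe (nlev k) e (a+2)) / 2"
      unfolding xe_def j using jl n by (auto simp: algebra_simps intro!: arg_cong[where f="($) e"])
    finally show ?thesis using False by simp
  qed
  finally show ?thesis .
qed

lemma sprod_self_sum: fixes v :: "real vec" assumes "v \<in> carrier_vec n"
  shows "v \<bullet> v = (\<Sum>a\<in>{0..<n}. (v $ a)^2)"
  using assms unfolding scalar_prod_def by (simp add: power2_eq_square)

lemma approxB:
  assumes k: "k \<ge> 1" and e: "e \<in> carrier_vec (nlev k)"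
  shows "\<exists>c\<in>carrier_vec (nlev (k-1)).
    (2 * 2^k / 3 - 1) * ((e - prolong k *\<^sub>v c) \<bullet> (e - prolong k *\<^sub>v c)) \<le> 4 * (e \<bullet> (Bmat k *\<^sub>v e))"
proof -
  let ?n = "nlev k"
  let ?nc = "nlev (k-1)"
  let ?X = "xe ?n e"
  define c where "c = vec ?nc (\<lambda>i. e $ (2*i+1))"
  have cc: "c \<in> carrier_vec ?nc" unfolding c_def by simp
  have Pc: "prolong k *\<^sub>v c \<in> carrier_vec ?n" using prolong_carrier[of k] cc by simp
  define h where "h = (\<lambda>a. if even a then (?X (a+1) - (?X a + ?X (a+2))/2)^2 else (0::real))"
  have comp: "(e - prolong k *\<^sub>v c) $ a = (if even a then ?X (a+1) - (?X a + ?X (a+2))/2 else 0)"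
    if a: "a < ?n" for a
  proof -
    have ea: "e $ a = ?X (a+1)" unfolding xe_def using a by simp
    have "(e - prolong k *\<^sub>v c) $ a = e $ a - (prolong k *\<^sub>v c) $ a"
      using a prolong_carrier[of k] by simp
    then show ?thesis using prolong_apply[OF k e a] ea unfolding c_def by auto
  qed
  have n: "?n = 2 * ?nc + 1" by (rule nlev_rec[OF k])
  define m where "m = Suc ?nc"
  have "(e - prolong k *\<^sub>v c) \<bullet> (e - prolong k *\<^sub>v c) = (\<Sum>a\<in>{0..<?n}. ((e - prolong k *\<^sub>v c) $ a)^2)"
    by (rule sprod_self_sum) (use e Pc in simp)
  also have "\<dots> = (\<Sum>a<?n. h a)" unfolding atLeast0LessThan h_def using comp by (intro sum.cong) auto
  also have "\<dots> = (\<Sum>a<2*m. h a)" unfolding m_def n h_def by simp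
  also have "\<dots> = (\<Sum>j<m. h (2*j) + h (2*j+1))" by (rule pair_sum)
  also have "\<dots> = (\<Sum>j<m. (?X (2*j+1) - (?X (2*j) + ?X (2*j+2))/2)^2)"
    unfolding h_def by (intro sum.cong) (auto simp: algebra_simps)
  finally have ff: "(e - prolong k *\<^sub>v c) \<bullet> (e - prolong k *\<^sub>v c) = (\<Sum>j<m. (?X (2*j+1) - (?X (2*j) + ?X (2*j+2))/2)^2)" .
  have m2: "m = 2^(k-1)"
  proof -
    have "Suc ?n = 2 * 2^(k-1)" using nlev_Suc[of k] pow_split[OF k] by simp
    then show ?thesis unfolding m_def using n by simp
  qed
  define F where "F = (e - prolong k *\<^sub>v c) \<bullet> (e - prolong k *\<^sub>v c)"
  have F0: "0 \<le> F" unfolding F_def by (rule sprod_self_nonneg)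
  have "(2^k / 6) * F \<le> e \<bullet> (Bmat k *\<^sub>v e)" unfolding F_def ff m2 by (rule Bquad_ge[OF k e])
  then have "4 * ((2^k / 6) * F) \<le> 4 * (e \<bullet> (Bmat k *\<^sub>v e))" by linarith
  moreover have "(2 * 2^k / 3 - 1) * F \<le> 4 * ((2^k / 6) * F)" using F0 by (simp add: algebra_simps)
  ultimately have "(2 * 2^k / 3 - 1) * F \<le> 4 * (e \<bullet> (Bmat k *\<^sub>v e))" by linarith
  then show ?thesis using cc unfolding F_def by blast
qed



lemma sA_carrier: "(\<alpha> \<cdot>\<^sub>m Bmat k) \<in> carrier_mat (nlev k) (nlev k)"
  using Bmat_carrier[of k] by simp

lemma sA_sym: "transpose_mat (\<alpha> \<cdot>\<^sub>m Bmat k) = \<alpha> \<cdot>\<^sub>m Bmat k"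
  using Bmat_carrier[of k] by (intro eq_matI) (auto simp: Bmat_entry bf_def)

lemma sA_quad: assumes e: "e \<in> carrier_vec (nlev k)"
  shows "e \<bullet> ((\<alpha> \<cdot>\<^sub>m Bmat k) *\<^sub>v e) = \<alpha> * (e \<bullet> (Bmat k *\<^sub>v e))"
proof -
  have "(\<alpha> \<cdot>\<^sub>m Bmat k) *\<^sub>v e = \<alpha> \<cdot>\<^sub>v (Bmat k *\<^sub>v e)" by (rule smult_mat_vec[OF Bmat_carrier e])
  moreover have "Bmat k *\<^sub>v e \<in> carrier_vec (nlev k)" using Bmat_carrier[of k] e by simp
  ultimately show ?thesis using e by simp
qed

lemma diag_part_sA: "diag_part (\<alpha> \<cdot>\<^sub>m Bmat k) = (\<alpha> * (2 * 2^k / 3 - 1)) \<cdot>\<^sub>m 1\<^sub>m (nlev k)"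
  unfolding diag_part_def using Bmat_carrier[of k] by (intro eq_matI) (auto simp: Bmat_entry bf_def)

lemma minv_props:
  fixes M :: "real mat"
  assumes M: "M \<in> carrier_mat m m" and det: "det M \<noteq> 0"
  shows "M * the (mat_inverse M) = 1\<^sub>m m" "the (mat_inverse M) \<in> carrier_mat m m"
proof -
  have "M \<in> Units (ring_mat TYPE(real) m m)" by (rule det_non_zero_imp_unit[OF M det])
  then obtain Y where Y: "mat_inverse M = Some Y" by (metis mat_inverse(1)[OF M] option.exhaust)
  from mat_inverse(2)[OF M Y] show "M * the (mat_inverse M) = 1\<^sub>m m" "the (mat_inverse M) \<in> carrier_mat m m"
    using Y by auto
qed

lemma det_sA: assumes k: "k \<ge> 1" and a: "\<alpha> > 0" shows "det (\<alpha> \<cdot>\<^sub>m Bmat k) \<noteq> 0"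
proof
  assume "det (\<alpha> \<cdot>\<^sub>m Bmat k) = 0"
  then obtain v where v: "v \<in> carrier_vec (nlev k)" "v \<noteq> 0\<^sub>v (nlev k)" "(\<alpha> \<cdot>\<^sub>m Bmat k) *\<^sub>v v = 0\<^sub>v (nlev k)"
    using det_0_iff_vec_prod_zero[OF sA_carrier] by blast
  have "v \<bullet> ((\<alpha> \<cdot>\<^sub>m Bmat k) *\<^sub>v v) = 0" using v by simp
  moreover have "0 < v \<bullet> ((\<alpha> \<cdot>\<^sub>m Bmat k) *\<^sub>v v)" unfolding sA_quad[OF v(1)]
    using B_pd[OF k v(1,2)] a by simp
  ultimately show False by simp
qed

lemma diag_inv_sA:
  assumes k: "k \<ge> 1" and a: "\<alpha> > 0"
  shows "diag_inv (\<alpha> \<cdot>\<^sub>m Bmat k) = (1 / (\<alpha> * (2 * 2^k / 3 - 1))) \<cdot>\<^sub>m 1\<^sub>m (nlev k)"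
proof -
  define d where "d = \<alpha> * (2 * 2^k / 3 - 1)"
  have "(2::real)^k \<ge> 2" using k by (metis power_increasing power_one_right numeral_le_one_iff one_le_numeral semiring_norm(69))
  then have d: "d > 0" unfolding d_def using a by simp
  let ?D = "d \<cdot>\<^sub>m 1\<^sub>m (nlev k)"
  have Dc: "?D \<in> carrier_mat (nlev k) (nlev k)" by simp
  have "det ?D \<noteq> 0" using d by simp
  note mp = minv_props[OF Dc this]
  define Y where "Y = the (mat_inverse ?D)"
  have Y: "Y \<in> carrier_mat (nlev k) (nlev k)" "?D * Y = 1\<^sub>m (nlev k)" using mp unfolding Y_def by auto
  have "?D * Y = d \<cdot>\<^sub>m Y" using Y by (simp add: mult_smult_assoc_mat[of _ "nlev k" "nlev k" _ "nlev k"])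
  then have "d \<cdot>\<^sub>m Y = 1\<^sub>m (nlev k)" using Y by simp
  then have "(1/d) \<cdot>\<^sub>m (d \<cdot>\<^sub>m Y) = (1/d) \<cdot>\<^sub>m 1\<^sub>m (nlev k)" by simp
  moreover have "(1::real) \<cdot>\<^sub>m Y = Y" by (intro eq_matI) auto
  ultimately have "Y = (1/d) \<cdot>\<^sub>m 1\<^sub>m (nlev k)" using d unfolding smult_smult_mat by simp
  then show ?thesis unfolding diag_inv_def diag_part_sA Y_def d_def .
qed


lemma two_pow_ge: "k \<ge> 1 \<Longrightarrow> (2::real)^k \<ge> 2"
  by (metis power_increasing power_one_right one_le_numeral)

lemma nlev_pos: assumes k: "k \<ge> 1" shows "nlev k > 0"
proof -
  have "(2::nat)^1 \<le> 2^k" by (rule power_increasing[OF k]) simp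
  then show ?thesis unfolding nlev_def by simp
qed

lemma level_spec:
  assumes k: "k \<ge> 1" and a: "\<alpha> > 0"
    and lm: "lambda_max (diag_inv (\<alpha> \<cdot>\<^sub>m Bmat k) * (\<alpha> \<cdot>\<^sub>m Bmat k)) \<le> \<eta>0"
  shows "\<And>u. u \<in> carrier_vec (nlev k) \<Longrightarrow> u \<bullet> ((\<alpha> \<cdot>\<^sub>m Bmat k) *\<^sub>v u) \<le> \<eta>0 * (\<alpha> * (2 * 2^k / 3 - 1)) * (u \<bullet> u)"
    and "1 \<le> \<eta>0"
proof -
  define d where "d = \<alpha> * (2 * 2^k / 3 - 1)"
  have d: "d > 0" unfolding d_def using a two_pow_ge[OF k] by simp
  have n: "nlev k > 0" by (rule nlev_pos[OF k])
  have Sd: "diag_inv (\<alpha> \<cdot>\<^sub>m Bmat k) * (\<alpha> \<cdot>\<^sub>m Bmat k) = (\<alpha> / d) \<cdot>\<^sub>m Bmat k"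
  proof -
    have "diag_inv (\<alpha> \<cdot>\<^sub>m Bmat k) * (\<alpha> \<cdot>\<^sub>m Bmat k) = (1/d) \<cdot>\<^sub>m 1\<^sub>m (nlev k) * (\<alpha> \<cdot>\<^sub>m Bmat k)"
      unfolding diag_inv_sA[OF k a] d_def ..
    also have "\<dots> = (1/d) \<cdot>\<^sub>m (\<alpha> \<cdot>\<^sub>m Bmat k)"
      using sA_carrier[of \<alpha> k] by (simp add: mult_smult_assoc_mat[of _ "nlev k" "nlev k" _ "nlev k"] left_mult_one_mat[OF sA_carrier])
    also have "\<dots> = (\<alpha> / d) \<cdot>\<^sub>m Bmat k" unfolding smult_smult_mat by simp
    finally show ?thesis .
  qed
  obtain lam where ev: "eigenvalue ((\<alpha> / d) \<cdot>\<^sub>m Bmat k) lam"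
    and ray: "\<forall>x\<in>carrier_vec (nlev k). x \<bullet> (((\<alpha> / d) \<cdot>\<^sub>m Bmat k) *\<^sub>v x) \<le> lam * (x \<bullet> x)"
    using sym_max_eig[OF sA_carrier sA_sym n] by blast
  have le: "lam \<le> \<eta>0" using eig_le_lambda_max[OF sA_carrier ev] lm unfolding Sd by simp
  show "u \<bullet> ((\<alpha> \<cdot>\<^sub>m Bmat k) *\<^sub>v u) \<le> \<eta>0 * (\<alpha> * (2 * 2^k / 3 - 1)) * (u \<bullet> u)"
    if u: "u \<in> carrier_vec (nlev k)" for u
  proof -
    have r: "(\<alpha> / d) * (u \<bullet> (Bmat k *\<^sub>v u)) \<le> lam * (u \<bullet> u)" using ray u sA_quad[OF u] by auto
    have "u \<bullet> ((\<alpha> \<cdot>\<^sub>m Bmat k) *\<^sub>v u) = d * ((\<alpha> / d) * (u \<bullet> (Bmat k *\<^sub>v u)))"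
      unfolding sA_quad[OF u] using d by simp
    also have "\<dots> \<le> d * (lam * (u \<bullet> u))" by (rule mult_left_mono[OF r]) (use d in simp)
    also have "\<dots> \<le> d * (\<eta>0 * (u \<bullet> u))"
      by (intro mult_left_mono mult_right_mono le sprod_self_nonneg) (use d in simp)
    finally show ?thesis unfolding d_def by (simp add: algebra_simps)
  qed
  have u0: "unit_vec (nlev k) 0 \<in> carrier_vec (nlev k)" by simp
  have "unit_vec (nlev k) 0 \<bullet> (((\<alpha> / d) \<cdot>\<^sub>m Bmat k) *\<^sub>v unit_vec (nlev k) 0) = ((\<alpha> / d) \<cdot>\<^sub>m Bmat k) $$ (0,0)"
  proof -
    let ?M = "(\<alpha> / d) \<cdot>\<^sub>m Bmat k"
    have Mc: "?M \<in> carrier_mat (nlev k) (nlev k)" by (rule sA_carrier)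
    have wc: "?M *\<^sub>v unit_vec (nlev k) 0 \<in> carrier_vec (nlev k)" using Mc by simp
    have "unit_vec (nlev k) 0 \<bullet> (?M *\<^sub>v unit_vec (nlev k) 0) = (?M *\<^sub>v unit_vec (nlev k) 0) $ 0"
      by (rule scalar_prod_left_unit[OF wc n])
    also have "\<dots> = row ?M 0 \<bullet> unit_vec (nlev k) 0"
    proof -
      have dr: "dim_row ?M = nlev k" using Mc by auto
      show ?thesis by (rule index_mult_mat_vec) (use dr n in auto)
    qed
    also have "\<dots> = row ?M 0 $ 0" by (rule scalar_prod_right_unit[OF n])
    also have "\<dots> = ?M $$ (0,0)"
    proof -
      have dr: "dim_row ?M = nlev k" "dim_col ?M = nlev k" using Mc by auto
      show ?thesis by (rule index_row(1)) (use dr n in auto)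
    qed
    finally show ?thesis .
  qed
  also have "\<dots> = 1" using n d a two_pow_ge[OF k] Bmat_carrier[of k] unfolding d_def by (simp add: Bmat_entry bf_def)
  finally have "1 \<le> lam * (unit_vec (nlev k) 0 \<bullet> unit_vec (nlev k) 0)" using ray u0 by metis
  then have "1 \<le> lam" using n by simp
  then show "1 \<le> \<eta>0" using le by simp
qed



lemma vnorm_sq: "0 \<le> v \<bullet> (M *\<^sub>v v) \<Longrightarrow> (vnorm M v)^2 = v \<bullet> (M *\<^sub>v v)"
  unfolding vnorm_def by simp

lemma sA_psd: assumes k: "k \<ge> 1" and a: "\<alpha> > 0" and e: "e \<in> carrier_vec (nlev k)"
  shows "0 \<le> e \<bullet> ((\<alpha> \<cdot>\<^sub>m Bmat k) *\<^sub>v e)"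
  unfolding sA_quad[OF e] using B_psd[OF k e] a by simp

lemma sA_pd: assumes k: "k \<ge> 1" and a: "\<alpha> > 0" and e: "e \<in> carrier_vec (nlev k)" and nz: "e \<noteq> 0\<^sub>v (nlev k)"
  shows "0 < e \<bullet> ((\<alpha> \<cdot>\<^sub>m Bmat k) *\<^sub>v e)"
  unfolding sA_quad[OF e] using B_pd[OF k e nz] a by simp

theorem mainTheorem10:
  fixes q :: nat and b \<eta>0 \<omega> \<eta> :: real
  assumes "q \<ge> 2" and "b > 0"
    and "\<forall>k\<in>{1..q}. lambda_max (diag_inv (Alev q b k) * Alev q b k) \<le> \<eta>0"
    and "\<eta>0 < 3"
    and "0 < \<omega>" and "\<omega> < 2 / \<eta>0"
    and "0 < \<eta>" and "\<eta> \<le> \<omega> * (2 - \<omega> * \<eta>0)"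
  shows "(\<forall>k\<in>{1..q}. \<forall>\<nu>\<in>carrier_vec (nlev k).
            (vnorm (Alev q b k) (Kmat \<omega> (Alev q b k) *\<^sub>v \<nu>))\<^sup>2
              \<le> (vnorm (Alev q b k) \<nu>)\<^sup>2
                 - \<eta> * (vnorm (diag_inv (Alev q b k)) (Alev q b k *\<^sub>v \<nu>))\<^sup>2)
       \<and> (\<forall>k\<in>{2..q}.
            opnorm (Alev q b k) (nlev k) (Kmat \<omega> (Alev q b k) * Tmat q b k) \<le> sqrt (1 - \<eta> / 4)
            \<and> sqrt (1 - \<eta> / 4) < 1)"
proof -
  note q = assms(1) and bpos = assms(2) and lm = assms(3) and om = assms(5) and etap = assms(7)
    and eta = assms(8)
  define al where "al = (\<lambda>k::nat. (b / 2^q)^2 * (2::real)^(q-k))"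
  have alpos: "al k > 0" for k unfolding al_def using bpos by simp
  define dd where "dd = (\<lambda>k::nat. al k * (2 * 2^k / 3 - 1))"
  have Aform: "Alev q b k = al k \<cdot>\<^sub>m Bmat k" if "k \<in> {1..q}" for k
    unfolding al_def using Alev_form[of k q b] that by simp
  have ddpos: "dd k > 0" if "k \<ge> 1" for k unfolding dd_def using alpos[of k] two_pow_ge[OF that] by simp
  have lmk: "lambda_max (diag_inv (al k \<cdot>\<^sub>m Bmat k) * (al k \<cdot>\<^sub>m Bmat k)) \<le> \<eta>0" if "k \<in> {1..q}" for k
  proof -
    have "lambda_max (diag_inv (Alev q b k) * Alev q b k) \<le> \<eta>0" using lm that by blast
    then show ?thesis unfolding Aform[OF that] .
  qed
  have spec: "u \<bullet> ((al k \<cdot>\<^sub>m Bmat k) *\<^sub>v u) \<le> \<eta>0 * dd k * (u \<bullet> u)"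
    if "k \<in> {1..q}" "u \<in> carrier_vec (nlev k)" for k u
    unfolding dd_def using level_spec(1)[OF _ alpos lmk[OF that(1)] that(2)] that(1) by simp
  have eta01: "1 \<le> \<eta>0" using level_spec(2)[OF _ alpos lmk[of q]] q by simp
  have eta1: "\<eta> \<le> 1"
  proof -
    have "\<omega> * 1 \<le> \<omega> * \<eta>0" using om eta01 by (intro mult_left_mono) auto
    then have "\<omega> * (2 - \<omega> * \<eta>0) \<le> \<omega> * (2 - \<omega>)" using om by (intro mult_left_mono) auto
    moreover have "\<omega> * (2 - \<omega>) = 1 - (1 - \<omega>)^2" by (simp add: power2_eq_square algebra_simps)
    moreover have "0 \<le> (1 - \<omega>)^2" by simp
    ultimately show ?thesis using eta by linarith
  qed
  have Kform: "Kmat \<omega> (al k \<cdot>\<^sub>m Bmat k) = 1\<^sub>m (nlev k) - \<omega> \<cdot>\<^sub>m ((1 / dd k) \<cdot>\<^sub>m 1\<^sub>m (nlev k) * (al k \<cdot>\<^sub>m Bmat k))"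
    if "k \<ge> 1" for k
    unfolding Kmat_def diag_inv_sA[OF that alpos] dd_def using Bmat_carrier[of k] by simp
  have part1: "\<forall>k\<in>{1..q}. \<forall>\<nu>\<in>carrier_vec (nlev k).
            (vnorm (Alev q b k) (Kmat \<omega> (Alev q b k) *\<^sub>v \<nu>))\<^sup>2
              \<le> (vnorm (Alev q b k) \<nu>)\<^sup>2
                 - \<eta> * (vnorm (diag_inv (Alev q b k)) (Alev q b k *\<^sub>v \<nu>))\<^sup>2"
  proof (intro ballI)
    fix k :: nat and \<nu> :: "real vec" assume kq: "k \<in> {1..q}" and nu: "\<nu> \<in> carrier_vec (nlev k)"
    have k: "k \<ge> 1" using kq by simp
    let ?A = "al k \<cdot>\<^sub>m Bmat k"
    let ?K = "1\<^sub>m (nlev k) - \<omega> \<cdot>\<^sub>m ((1 / dd k) \<cdot>\<^sub>m 1\<^sub>m (nlev k) * ?A)"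
    have sm: "(?K *\<^sub>v \<nu>) \<bullet> (?A *\<^sub>v (?K *\<^sub>v \<nu>)) \<le> \<nu> \<bullet> (?A *\<^sub>v \<nu>) - (\<eta> / dd k) * ((?A *\<^sub>v \<nu>) \<bullet> (?A *\<^sub>v \<nu>))"
      by (rule smoothing[OF sA_carrier sA_sym ddpos[OF k] spec[OF kq] eta nu])
    have Kc: "?K \<in> carrier_mat (nlev k) (nlev k)"
      using sA_carrier[of "al k" k] Bmat_carrier[of k] by (intro minus_carrier_mat smult_carrier_mat mult_carrier_mat) auto
    have Kv: "?K *\<^sub>v \<nu> \<in> carrier_vec (nlev k)" using Kc nu by simp
    have Av: "?A *\<^sub>v \<nu> \<in> carrier_vec (nlev k)" using sA_carrier nu by (rule mult_mat_vec_carrier)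
    have n1: "(vnorm ?A (?K *\<^sub>v \<nu>))^2 = (?K *\<^sub>v \<nu>) \<bullet> (?A *\<^sub>v (?K *\<^sub>v \<nu>))"
      by (rule vnorm_sq[OF sA_psd[OF k alpos Kv]])
    have n2: "(vnorm ?A \<nu>)^2 = \<nu> \<bullet> (?A *\<^sub>v \<nu>)" by (rule vnorm_sq[OF sA_psd[OF k alpos nu]])
    have Dv: "((1 / dd k) \<cdot>\<^sub>m 1\<^sub>m (nlev k)) *\<^sub>v (?A *\<^sub>v \<nu>) = (1 / dd k) \<cdot>\<^sub>v (?A *\<^sub>v \<nu>)"
      using smult_mat_vec[OF one_carrier_mat Av] Av by simp
    have n3q: "(?A *\<^sub>v \<nu>) \<bullet> (((1 / dd k) \<cdot>\<^sub>m 1\<^sub>m (nlev k)) *\<^sub>v (?A *\<^sub>v \<nu>)) = (1 / dd k) * ((?A *\<^sub>v \<nu>) \<bullet> (?A *\<^sub>v \<nu>))"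
      unfolding Dv using Av by simp
    have ddk: "al k * (2 * 2^k / 3 - 1) = dd k" by (simp add: dd_def)
    have n3: "(vnorm (diag_inv ?A) (?A *\<^sub>v \<nu>))^2 = (1 / dd k) * ((?A *\<^sub>v \<nu>) \<bullet> (?A *\<^sub>v \<nu>))"
      unfolding diag_inv_sA[OF k alpos] ddk using n3q
      by (subst vnorm_sq) (use ddpos[OF k] sprod_self_nonneg in auto)
    have "(vnorm ?A (Kmat \<omega> ?A *\<^sub>v \<nu>))\<^sup>2 \<le> (vnorm ?A \<nu>)\<^sup>2 - \<eta> * (vnorm (diag_inv ?A) (?A *\<^sub>v \<nu>))\<^sup>2"
      unfolding Kform[OF k] n1 n2 n3 using sm by simp
    then show "(vnorm (Alev q b k) (Kmat \<omega> (Alev q b k) *\<^sub>v \<nu>))\<^sup>2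
              \<le> (vnorm (Alev q b k) \<nu>)\<^sup>2
                 - \<eta> * (vnorm (diag_inv (Alev q b k)) (Alev q b k *\<^sub>v \<nu>))\<^sup>2"
      unfolding Aform[OF kq] .
  qed
  have part2: "\<forall>k\<in>{2..q}.
            opnorm (Alev q b k) (nlev k) (Kmat \<omega> (Alev q b k) * Tmat q b k) \<le> sqrt (1 - \<eta> / 4)
            \<and> sqrt (1 - \<eta> / 4) < 1"
  proof
    fix k assume k2: "k \<in> {2..q}"
    have kq: "k \<in> {1..q}" and k: "k \<ge> 1" and k1q: "k - 1 \<in> {1..q}" and k1: "k - 1 \<ge> 1" using k2 by auto
    let ?A = "al k \<cdot>\<^sub>m Bmat k"
    let ?n = "nlev k"
    let ?nc = "nlev (k-1)"
    let ?K = "1\<^sub>m ?n - \<omega> \<cdot>\<^sub>m ((1 / dd k) \<cdot>\<^sub>m 1\<^sub>m ?n * ?A)"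
    define X where "X = minv (Alev q b (k-1))"
    have Ac: "Alev q b (k-1) = al (k-1) \<cdot>\<^sub>m Bmat (k-1)" by (rule Aform[OF k1q])
    have Acc: "Alev q b (k-1) \<in> carrier_mat ?nc ?nc" unfolding Ac by (rule sA_carrier)
    have Adet: "det (Alev q b (k-1)) \<noteq> 0" unfolding Ac by (rule det_sA[OF k1 alpos])
    have Xc: "X \<in> carrier_mat ?nc ?nc" and AX: "Alev q b (k-1) * X = 1\<^sub>m ?nc"
      using minv_props[OF Acc Adet] unfolding X_def minv_def by auto
    have RAPX: "(restr k * ?A * prolong k) * X = 1\<^sub>m ?nc"
      using AX unfolding Alev_pred[OF k kq[simplified, THEN conjunct2]] Aform[OF kq] .
    have approx: "\<exists>c\<in>carrier_vec ?nc. dd k * ((e - prolong k *\<^sub>v c) \<bullet> (e - prolong k *\<^sub>v c)) \<le> 4 * (e \<bullet> (?A *\<^sub>v e))"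
      if e: "e \<in> carrier_vec ?n" for e
    proof -
      obtain c where c: "c \<in> carrier_vec ?nc"
        and ineq: "(2 * 2^k / 3 - 1) * ((e - prolong k *\<^sub>v c) \<bullet> (e - prolong k *\<^sub>v c)) \<le> 4 * (e \<bullet> (Bmat k *\<^sub>v e))"
        using approxB[OF k e] by blast
      have "al k * ((2 * 2^k / 3 - 1) * ((e - prolong k *\<^sub>v c) \<bullet> (e - prolong k *\<^sub>v c))) \<le> al k * (4 * (e \<bullet> (Bmat k *\<^sub>v e)))"
        by (rule mult_left_mono[OF ineq]) (use alpos[of k] in simp)
      then have "dd k * ((e - prolong k *\<^sub>v c) \<bullet> (e - prolong k *\<^sub>v c)) \<le> 4 * (e \<bullet> (?A *\<^sub>v e))"
        unfolding dd_def sA_quad[OF e] by (simp add: algebra_simps)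
      then show ?thesis using c by blast
    qed
    have tg: "((?K * (1\<^sub>m ?n - prolong k * X * restr k * ?A)) *\<^sub>v v) \<bullet>
         (?A *\<^sub>v ((?K * (1\<^sub>m ?n - prolong k * X * restr k * ?A)) *\<^sub>v v))
       \<le> (1 - \<eta>/4) * (v \<bullet> (?A *\<^sub>v v))" if v: "v \<in> carrier_vec ?n" for v
      by (rule twogrid[OF sA_carrier sA_sym ddpos[OF k] spec[OF kq] sA_psd[OF k alpos] restr_carrier
          prolong_def Xc RAPX approx eta _ _ v]) (use etap eta1 in auto)
    have Mform: "Kmat \<omega> (Alev q b k) * Tmat q b k = ?K * (1\<^sub>m ?n - prolong k * X * restr k * ?A)"
      unfolding Tmat_def X_def Aform[OF kq] Kform[OF k] ..
    let ?M = "?K * (1\<^sub>m ?n - prolong k * X * restr k * ?A)"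
    have Mc: "?M \<in> carrier_mat ?n ?n"
    proof -
      have "prolong k * X * restr k * ?A \<in> carrier_mat ?n ?n"
        using prolong_carrier[of k] Xc restr_carrier[of k] sA_carrier[of "al k" k]
        by (meson mult_carrier_mat)
      then have T: "1\<^sub>m ?n - prolong k * X * restr k * ?A \<in> carrier_mat ?n ?n" by (rule minus_carrier_mat)
      have K: "?K \<in> carrier_mat ?n ?n"
        using sA_carrier[of "al k" k] Bmat_carrier[of k] by (intro minus_carrier_mat smult_carrier_mat mult_carrier_mat) auto
      show ?thesis by (rule mult_carrier_mat[OF K T])
    qed
    have n0: "?n > 0" by (rule nlev_pos[OF k])
    define S where "S = {vnorm ?A (?M *\<^sub>v v) / vnorm ?A v | v. v \<in> carrier_vec ?n \<and> v \<noteq> 0\<^sub>v ?n}"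
    have Sne: "S \<noteq> {}"
    proof -
      have "unit_vec ?n 0 \<in> carrier_vec ?n" "unit_vec ?n 0 \<noteq> 0\<^sub>v ?n"
        using n0 by (auto simp: unit_vec_def dest!: arg_cong[where f="\<lambda>v. v $ 0"])
      then show ?thesis unfolding S_def by blast
    qed
    have Sb: "s \<le> sqrt (1 - \<eta>/4)" if sS: "s \<in> S" for s
    proof -
      obtain v where v: "v \<in> carrier_vec ?n" "v \<noteq> 0\<^sub>v ?n" and s: "s = vnorm ?A (?M *\<^sub>v v) / vnorm ?A v"
        using sS unfolding S_def by blast
      have Mv: "?M *\<^sub>v v \<in> carrier_vec ?n" using Mc v by simp
      have Q: "0 < v \<bullet> (?A *\<^sub>v v)" by (rule sA_pd[OF k alpos v])
      have "vnorm ?A (?M *\<^sub>v v) = sqrt ((?M *\<^sub>v v) \<bullet> (?A *\<^sub>v (?M *\<^sub>v v)))" unfolding vnorm_def ..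
      also have "\<dots> \<le> sqrt ((1 - \<eta>/4) * (v \<bullet> (?A *\<^sub>v v)))" using tg[OF v(1)] by simp
      also have "\<dots> = sqrt (1 - \<eta>/4) * vnorm ?A v" unfolding vnorm_def by (simp add: real_sqrt_mult)
      finally have "vnorm ?A (?M *\<^sub>v v) \<le> sqrt (1 - \<eta>/4) * vnorm ?A v" .
      moreover have "vnorm ?A v > 0" unfolding vnorm_def using Q by simp
      ultimately show ?thesis unfolding s by (simp add: divide_le_eq)
    qed
    have "opnorm ?A ?n ?M \<le> sqrt (1 - \<eta>/4)"
      unfolding opnorm_def S_def[symmetric] by (rule cSup_least[OF Sne Sb])
    then have "opnorm (Alev q b k) (nlev k) (Kmat \<omega> (Alev q b k) * Tmat q b k) \<le> sqrt (1 - \<eta> / 4)"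
    proof -
      have "opnorm (Alev q b k) (nlev k) (Kmat \<omega> (Alev q b k) * Tmat q b k) = opnorm ?A ?n ?M"
        by (subst Mform) (simp only: Aform[OF kq])
      then show ?thesis using \<open>opnorm ?A ?n ?M \<le> sqrt (1 - \<eta>/4)\<close> by simp
    qed
    moreover have "sqrt (1 - \<eta> / 4) < 1" using etap by simp
    ultimately show "opnorm (Alev q b k) (nlev k) (Kmat \<omega> (Alev q b k) * Tmat q b k) \<le> sqrt (1 - \<eta> / 4)
            \<and> sqrt (1 - \<eta> / 4) < 1" by blast
  qed
  from part1 part2 show ?thesis by blast
qed


end
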